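(* Let $\mathcal{D}$ be a distribution over samples $(\bm{x},y)$, $\ell(\bm{w},\bm{x},y)$ a loss differentiable in $\bm{w}$, and let $\mathcal{W}\subset\mathbb{R}^d$ be a bounded convex set with diameter $D_{\mathcal{W}}<\infty$. Suppose there is a function $G(\bm{x},y)\ge0$ with $\|\nabla_{\bm{w}}\ell(\bm{w},\bm{x},y)\|\le G(\bm{x},y)$ for all $\bm{w}\in\mathcal{W}$ and all $(\bm{x},y)$ in the support of $\mathcal{D}$, and that for some $k>1$ and $G>0$, $\left(\mathbb{E}_{(\bm{x},y)\sim\mathcal{D}}[G(\bm{x},y)^k]\right)^{1/k}\le G$. Let $\mathcal{Z}=\{(\bm{x}_i,y_i)\}_{i=1}^n$ be i.i.d. from $\mathcal{D}$, $f_i(\bm{w})=\ell(\bm{w},\bm{x}_i,y_i)$, $f=\frac1n\sum_if_i$, and suppose $f$ is convex. Fix $\gamma\in(0,1)$ and $T\ge1$, and run DP-SGD over $\mathcal{W}$ with $\tau=\frac{G}{\gamma^{1/k}}\left(\frac1T+\varphi^2\right)^{-\frac1{2k}}$, $\eta_t=\eta=\frac{D_{\mathcal{W}}}{T\tau}\left(\frac1T+\varphi^2\right)^{-\frac12}$ for all $t<T$, and $\sigma_n^2=\frac{\nu T\log(1/\delta)\tau^2}{n^2\varepsilon^2}$. Then with probability at least $1-\gamma$ over the random dataset $\mathcal{Z}$, $$\mathrm{OR}(T)\le\frac{5D_{\mathcal{W}}G}{2\gamma^{1/k}}\left(\frac1T+\varphi^2\right)^{\frac12(1-\frac1k)}.$$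 In particular, for $T=\frac1{\varphi^2}$, $\mathrm{OR}(T)\le\frac{5D_{\mathcal{W}}G}{2^{\frac12(1+\frac1k)}\gamma^{1/k}}\varphi^{1-\frac1k}$.
   Context: For $\bm{z}\in\mathbb{R}^d$ and $c>0$, $\mathrm{clip}(\bm{z},c)=\bm{z}\min(1,c/\|\bm{z}\|)$ ($\|\cdot\|$ Euclidean). DP-SGD on $f=\frac1n\sum_if_i$ over $\mathcal{W}$: given $\bm{w}_0\in\mathcal{W}$, $T$, step sizes $\eta_t$, a parameter $b\ge1$, clip norm $\tau$, noise variance $\sigma_n^2$: for $t=0,\dots,T-1$, form $\mathcal{S}_t\subseteq[n]$ by including each index independently with probability $b/n$; $\bm{g}_t=\frac1b\sum_{i\in\mathcal{S}_t}\mathrm{clip}(\nabla f_i(\bm{w}_t),\tau)+\bm{\zeta}_t$, $\bm{\zeta}_t\sim\mathcal{N}(\bm{0},\sigma_n^2I_d)$ independent; $\bm{w}_{t+1}=\Pi_{\mathcal{W}}(\bm{w}_t-\eta_t\bm{g}_t)$ (Euclidean projection). Output $\bm{w}_{\mathrm{priv}}=\bm{w}_{\widehat t}$, $\widehat t$ uniform on $\{0,\dots,T-1\}$. Here $\varepsilon>0$, $\delta\in(0,1)$, $\nu>0$ a fixed absolute constant, $\varphi=\frac{\sqrt{\nu d\log(1/\delta)}}{n\varepsilon}$. The optimization risk is $\mathrm{OR}(T)=\mathbb{E}[f(\bm{w}_{\mathrm{priv}})]-f(\bm{w}^* )$ with $\bm{w}^*\in\arg\min_{\bm{w}\in\mathcal{W}}f(\bm{w})$,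 the expectation being over the algorithm's randomness conditional on $\mathcal{Z}$. *)

theory Defs
  imports "HOL-Analysis.Analysis" "HOL-Probability.Probability"
begin

definition clip :: "'v::real_normed_vector \<Rightarrow> real \<Rightarrow> 'v" where
  "clip z c = min 1 (c / norm z) *\<^sub>R z"

definition emp_obj :: "('w \<Rightarrow> 'z \<Rightarrow> real) \<Rightarrow> nat \<Rightarrow> (nat \<Rightarrow> 'z) \<Rightarrow> 'w \<Rightarrow> real" where
  "emp_obj loss n Z w = (1 / real n) * (\<Sum>i<n. loss w (Z i))"

text \<open>Randomness of DP-SGD: for each step t < T, Poisson-subsampling indicators
  (index i included with probability b/n, independently) and i.i.d. N(0,sigma^2) noise
  coordinates, all mutually independent.\<close>
definition dpsgd_rand ::
  "nat \<Rightarrow> nat \<Rightarrow> real \<Rightarrow> real \<Rightarrow> ((nat \<times> nat \<Rightarrow> bool) \<times> (nat \<times> 'd::finite \<Rightarrow> real)) measure" where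
  "dpsgd_rand n T b \<sigma> =
     (PiM ({0..<T} \<times> {0..<n}) (\<lambda>_. measure_pmf (bernoulli_pmf (b / real n))))
     \<Otimes>\<^sub>M (PiM ({0..<T} \<times> (UNIV :: 'd set)) (\<lambda>_. density lborel (normal_density 0 \<sigma>)))"

fun dpsgd_iter ::
  "(real^'d \<Rightarrow> 'z \<Rightarrow> real^'d) \<Rightarrow> nat \<Rightarrow> (nat \<Rightarrow> 'z) \<Rightarrow> (real^'d) set \<Rightarrow> real^'d
   \<Rightarrow> (nat \<Rightarrow> real) \<Rightarrow> real \<Rightarrow> real
   \<Rightarrow> (nat \<times> nat \<Rightarrow> bool) \<times> (nat \<times> 'd::finite \<Rightarrow> real) \<Rightarrow> nat \<Rightarrow> real^'d" where
  "dpsgd_iter grad n Z W w0 \<eta> b \<tau> \<omega> 0 = w0"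
| "dpsgd_iter grad n Z W w0 \<eta> b \<tau> \<omega> (Suc t) =
     (let w = dpsgd_iter grad n Z W w0 \<eta> b \<tau> \<omega> t;
          g = (1 / b) *\<^sub>R (\<Sum>i\<in>{i. i < n \<and> fst \<omega> (t, i)}. clip (grad w (Z i)) \<tau>)
              + (\<chi> j. snd \<omega> (t, j))
      in closest_point W (w - \<eta> t *\<^sub>R g))"

end

theory Submission
  imports Defs
begin


lemma vec_lambda_sum_axis: "(\<chi> j. f j) = (\<Sum>j\<in>UNIV. f j *\<^sub>R (axis j 1 :: real^'d::finite))"
  by (simp add: vec_eq_iff sum_component axis_def if_distrib[where f="\<lambda>x. _ * x"] cong: if_cong)

lemma borel_measurable_vec_lambda[measurable]:
  fixes f :: "'d::finite \<Rightarrow> 'a \<Rightarrow> real"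
  assumes "\<And>j. f j \<in> borel_measurable M"
  shows "(\<lambda>x. (\<chi> j. f j x) :: real^'d) \<in> borel_measurable M"
  unfolding vec_lambda_sum_axis using assms by measurable

lemma grad_measurable:
  fixes loss :: "real^'d \<Rightarrow> real" and grad :: "real^'d \<Rightarrow> real^'d"
  assumes d: "\<And>w. (loss has_derivative (\<lambda>h. grad w \<bullet> h)) (at w)"
  shows "grad \<in> borel_measurable borel"
proof -
  define q where "q m w = (\<chi> j. real (Suc m) * (loss (w + (1 / real (Suc m)) *\<^sub>R axis j 1) - loss w))" for m w
  have cont: "continuous_on UNIV loss"
    using d has_derivative_continuous continuous_at_imp_continuous_on by blast
  have qm: "q m \<in> borel_measurable borel" for m
    unfolding q_def
    by (intro borel_measurable_vec_lambda borel_measurable_continuous_onI continuous_intros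
        continuous_on_compose2[OF cont]) auto
  have lim: "(\<lambda>m. q m w) \<longlonglongrightarrow> grad w" for w
  proof (rule vec_tendstoI)
    fix j
    define F where "F s = loss (w + s *\<^sub>R axis j 1)" for s :: real
    have "((\<lambda>s. w + s *\<^sub>R axis j 1) has_derivative (\<lambda>s. s *\<^sub>R axis j 1)) (at 0)"
      by (auto intro!: derivative_eq_intros)
    from has_derivative_compose[OF this, of loss "\<lambda>h. grad w \<bullet> h"] d[of w]
    have "(F has_derivative (\<lambda>s. grad w \<bullet> (s *\<^sub>R axis j 1))) (at 0)"
      unfolding F_def o_def by simp
    moreover have "(\<lambda>s. grad w \<bullet> (s *\<^sub>R axis j 1)) = (*) (grad w $ j)"
      by (auto simp: inner_axis)
    ultimately have "(F has_real_derivative (grad w $ j)) (at 0)"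
      by (simp add: has_field_derivative_def)
    hence L: "((\<lambda>h. (F (0 + h) - F 0) / h) \<longlongrightarrow> grad w $ j) (at 0)"
      by (simp add: DERIV_def)
    have "filterlim (\<lambda>m. 1 / real (Suc m)) (at 0) sequentially"
      unfolding filterlim_at
      by (auto intro!: LIMSEQ_Suc[OF lim_const_over_n] simp del: of_nat_Suc)
    from filterlim_compose[OF L this]
    have "(\<lambda>m. (F (1 / real (Suc m)) - F 0) / (1 / real (Suc m))) \<longlonglongrightarrow> grad w $ j"
      by simp
    moreover have "(F (1 / real (Suc m)) - F 0) / (1 / real (Suc m)) = q m w $ j" for m
      by (simp add: q_def F_def)
    ultimately show "(\<lambda>m. q m w $ j) \<longlonglongrightarrow> grad w $ j" by simp
  qed
  show ?thesis
    by (rule borel_measurable_LIMSEQ_metric[OF qm lim])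
qed


lemma clip_measurable[measurable]:
  "(\<lambda>z::'v::{real_normed_vector, second_countable_topology}. clip z c) \<in> borel_measurable borel"
  unfolding clip_def by measurable

lemma sets_dpsgd_rand: "sets (dpsgd_rand n T b \<sigma>) = sets (
     (PiM ({0..<T} \<times> {0..<n}) (\<lambda>_. measure_pmf (bernoulli_pmf (b / real n))))
     \<Otimes>\<^sub>M (PiM ({0..<T} \<times> (UNIV :: 'd::finite set)) (\<lambda>_. density lborel (normal_density 0 \<sigma>))))"
  by (simp add: dpsgd_rand_def)

lemma dpsgd_iter_Suc':
  "dpsgd_iter grad n Z W w0 \<eta> b \<tau> \<omega> (Suc t) =
     closest_point W (dpsgd_iter grad n Z W w0 \<eta> b \<tau> \<omega> t - \<eta> t *\<^sub>R
       ((1 / b) *\<^sub>R (\<Sum>i<n. if fst \<omega> (t, i) then clip (grad (dpsgd_iter grad n Z W w0 \<eta> b \<tau> \<omega> t) (Z i)) \<tau> else 0)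
        + (\<chi> j. snd \<omega> (t, j))))"
proof -
  have "(\<Sum>i | i < n \<and> fst \<omega> (t, i). g i) = (\<Sum>i<n. if fst \<omega> (t, i) then g i else 0)" for g :: "nat \<Rightarrow> real^'a"
    using sum.inter_filter[of "{..<n}" g "\<lambda>i. fst \<omega> (t, i)"] by simp
  then show ?thesis by (simp add: Let_def)
qed

lemma fst_comp_meas[measurable]:
  assumes "t < T" "i < n"
  shows "(\<lambda>\<omega>. fst \<omega> (t, i)) \<in> measurable (dpsgd_rand n T b \<sigma> :: (_ \<times> (nat \<times> 'd::finite \<Rightarrow> real)) measure) (count_space UNIV)"
proof -
  have "(\<lambda>\<omega>::(_ \<times> (nat \<times> 'd::finite \<Rightarrow> real)). fst \<omega> (t, i)) \<in> measurable (dpsgd_rand n T b \<sigma>) (measure_pmf (bernoulli_pmf (b / real n)))"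
    unfolding dpsgd_rand_def
    by (rule measurable_compose[OF measurable_fst measurable_component_singleton]) (use assms in auto)
  then show ?thesis by simp
qed

lemma snd_comp_meas[measurable]:
  assumes "t < T"
  shows "(\<lambda>\<omega>. snd \<omega> (t, j)) \<in> borel_measurable (dpsgd_rand n T b \<sigma> :: (_ \<times> (nat \<times> 'd::finite \<Rightarrow> real)) measure)"
proof -
  have "(\<lambda>\<omega>::(_ \<times> (nat \<times> 'd::finite \<Rightarrow> real)). snd \<omega> (t, j)) \<in> measurable (dpsgd_rand n T b \<sigma>) (density lborel (normal_density 0 \<sigma>))"
    unfolding dpsgd_rand_def
    by (rule measurable_compose[OF measurable_snd measurable_component_singleton]) (use assms in auto)
  then show ?thesis by (simp cong: measurable_cong_sets)
qed

lemma iter_meas: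
  fixes grad :: "real^'d::finite \<Rightarrow> 'z \<Rightarrow> real^'d"
  assumes gm: "\<And>i. i < n \<Longrightarrow> (\<lambda>w. grad w (Z i)) \<in> borel_measurable borel"
    and W: "convex W" "closed W" "W \<noteq> {}"
  shows "t \<le> T \<Longrightarrow> (\<lambda>\<omega>. dpsgd_iter grad n Z W w0 \<eta> b \<tau> \<omega> t) \<in> borel_measurable (dpsgd_rand n T b \<sigma> :: (_ \<times> (nat \<times> 'd \<Rightarrow> real)) measure)"
proof (induction t)
  case 0
  then show ?case by simp
next
  case (Suc t)
  then have t: "t < T" by simp
  note IH[measurable] = Suc.IH[OF less_imp_le[OF t]]
  note t[measurable]
  have cp[measurable]: "closest_point W \<in> borel_measurable borel"
    by (rule borel_measurable_continuous_onI[OF continuous_on_closest_point[OF W]])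
  have gi[measurable]: "(\<lambda>\<omega>. grad (dpsgd_iter grad n Z W w0 \<eta> b \<tau> \<omega> t) (Z i)) \<in> borel_measurable (dpsgd_rand n T b \<sigma> :: (_ \<times> (nat \<times> 'd \<Rightarrow> real)) measure)" if "i < n" for i
    using measurable_compose[OF IH gm[OF that]] .
  show ?case
    unfolding dpsgd_iter_Suc'
    by measurable
qed


lemma decomp4:
  fixes B :: "'i \<Rightarrow> 'a measure" and N :: "'j \<Rightarrow> 'b measure"
  assumes PB: "\<And>i. prob_space (B i)" and PN: "\<And>j. prob_space (N j)"
    and K1: "finite K1" "finite J1" "K1 \<inter> J1 = {}"
    and K2: "finite K2" "finite J2" "K2 \<inter> J2 = {}"
    and F[measurable]: "F \<in> borel_measurable (PiM (K1 \<union> J1) B \<Otimes>\<^sub>M PiM (K2 \<union> J2) N)"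
  shows "(\<integral>\<^sup>+\<omega>. F \<omega> \<partial>(PiM (K1 \<union> J1) B \<Otimes>\<^sub>M PiM (K2 \<union> J2) N)) =
    (\<integral>\<^sup>+x1. \<integral>\<^sup>+x2. \<integral>\<^sup>+y1. \<integral>\<^sup>+y2. F (merge K1 J1 (x1, y1), merge K2 J2 (x2, y2))
        \<partial>PiM J2 N \<partial>PiM J1 B \<partial>PiM K2 N \<partial>PiM K1 B)"
proof -
  interpret pB: product_sigma_finite B by (simp add: PB product_sigma_finite_def prob_space_imp_sigma_finite)
  interpret pN: product_sigma_finite N by (simp add: PN product_sigma_finite_def prob_space_imp_sigma_finite)
  interpret M2: prob_space "PiM (K2 \<union> J2) N" by (rule prob_space_PiM) (simp add: PN)
  interpret PJ1: prob_space "PiM J1 B" by (rule prob_space_PiM) (simp add: PB)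
  interpret PK2: prob_space "PiM K2 N" by (rule prob_space_PiM) (simp add: PN)
  interpret PJ2: prob_space "PiM J2 N" by (rule prob_space_PiM) (simp add: PN)
  interpret P12: pair_sigma_finite "PiM J1 B" "PiM K2 N" by standard
  have "(\<integral>\<^sup>+\<omega>. F \<omega> \<partial>(PiM (K1 \<union> J1) B \<Otimes>\<^sub>M PiM (K2 \<union> J2) N)) =
     (\<integral>\<^sup>+\<omega>1. \<integral>\<^sup>+\<omega>2. F (\<omega>1, \<omega>2) \<partial>PiM (K2 \<union> J2) N \<partial>PiM (K1 \<union> J1) B)"
    by (rule M2.nn_integral_fst[symmetric]) measurable
  also have "\<dots> = (\<integral>\<^sup>+x1. \<integral>\<^sup>+y1. (\<integral>\<^sup>+\<omega>2. F (merge K1 J1 (x1, y1), \<omega>2) \<partial>PiM (K2 \<union> J2) N) \<partial>PiM J1 B \<partial>PiM K1 B)"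
    by (rule pB.product_nn_integral_fold) (use K1 in auto)
  also have "\<dots> = (\<integral>\<^sup>+x1. \<integral>\<^sup>+y1. \<integral>\<^sup>+x2. \<integral>\<^sup>+y2. F (merge K1 J1 (x1, y1), merge K2 J2 (x2, y2))
        \<partial>PiM J2 N \<partial>PiM K2 N \<partial>PiM J1 B \<partial>PiM K1 B)"
    apply (intro nn_integral_cong)
    apply (rule pN.product_nn_integral_fold)
    using K2 apply auto[3]
    apply measurable
    apply (rule measurable_space[OF measurable_merge], simp add: space_pair_measure)
    apply simp
    done
  also have "\<dots> = (\<integral>\<^sup>+x1. \<integral>\<^sup>+x2. \<integral>\<^sup>+y1. \<integral>\<^sup>+y2. F (merge K1 J1 (x1, y1), merge K2 J2 (x2, y2))
        \<partial>PiM J2 N \<partial>PiM J1 B \<partial>PiM K2 N \<partial>PiM K1 B)"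
    apply (intro nn_integral_cong)
    subgoal for x1
      apply (rule P12.Fubini'[symmetric, where f="\<lambda>y1 x2. \<integral>\<^sup>+y2. F (merge K1 J1 (x1, y1), merge K2 J2 (x2, y2)) \<partial>PiM J2 N"])
      apply measurable
      done
    done
  finally show ?thesis .
qed


lemma iter_local:
  "(\<And>s i. s < t \<Longrightarrow> i < n \<Longrightarrow> fst \<omega> (s, i) = fst \<omega>' (s, i)) \<Longrightarrow>
   (\<And>s j. s < t \<Longrightarrow> snd \<omega> (s, j) = snd \<omega>' (s, j)) \<Longrightarrow>
   dpsgd_iter grad n Z W w0 \<eta> b \<tau> \<omega> t = dpsgd_iter grad n Z W w0 \<eta> b \<tau> \<omega>' t"
proof (induction t)
  case 0
  then show ?case by simp
next
  case (Suc t)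
  have IH: "dpsgd_iter grad n Z W w0 \<eta> b \<tau> \<omega> t = dpsgd_iter grad n Z W w0 \<eta> b \<tau> \<omega>' t"
    using Suc by simp
  show ?case
    unfolding dpsgd_iter_Suc' IH using Suc.prems by simp
qed

lemma iter_in_W:
  assumes "closed W" "w0 \<in> W"
  shows "dpsgd_iter grad n Z W w0 \<eta> b \<tau> \<omega> t \<in> W"
proof (cases t)
  case (Suc s)
  have "W \<noteq> {}" using assms by auto
  then show ?thesis using Suc assms(1) by (simp add: Let_def closest_point_in_set)
qed (use assms in simp)

lemma step_le:
  fixes grad :: "real^'d::finite \<Rightarrow> 'z \<Rightarrow> real^'d"
    and \<Phi> :: "real^'d \<Rightarrow> (nat \<Rightarrow> bool) \<Rightarrow> ('d \<Rightarrow> real) \<Rightarrow> ennreal"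
    and H :: "real^'d \<Rightarrow> ennreal"
    and n T :: nat and b \<sigma> :: real and Z :: "nat \<Rightarrow> 'z" and W :: "(real^'d) set"
    and w0 :: "real^'d" and \<eta> :: "nat \<Rightarrow> real" and \<tau> :: real
  defines "\<Omega> \<equiv> (dpsgd_rand n T b \<sigma> :: ((nat \<times> nat \<Rightarrow> bool) \<times> (nat \<times> 'd \<Rightarrow> real)) measure)"
  defines "it \<equiv> dpsgd_iter grad n Z W w0 \<eta> b \<tau>"
  assumes t: "t < T" and \<sigma>: "0 < \<sigma>" and W: "closed W" "w0 \<in> W"
    and Fm: "(\<lambda>\<omega>. \<Phi> (it \<omega> t) (\<lambda>i. fst \<omega> (t, i)) (\<lambda>j. snd \<omega> (t, j))) \<in> borel_measurable \<Omega>"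
    and Hm: "(\<lambda>\<omega>. H (it \<omega> t)) \<in> borel_measurable \<Omega>"
    and le: "\<And>u. u \<in> W \<Longrightarrow>
      (\<integral>\<^sup>+y1. \<integral>\<^sup>+y2. \<Phi> u (\<lambda>i. y1 (t, i)) (\<lambda>j. y2 (t, j))
         \<partial>PiM ({t} \<times> UNIV) (\<lambda>_. density lborel (normal_density 0 \<sigma>))
         \<partial>PiM ({t} \<times> {0..<n}) (\<lambda>_. measure_pmf (bernoulli_pmf (b / real n)))) \<le> H u"
  shows "(\<integral>\<^sup>+\<omega>. \<Phi> (it \<omega> t) (\<lambda>i. fst \<omega> (t, i)) (\<lambda>j. snd \<omega> (t, j)) \<partial>\<Omega>) \<le> (\<integral>\<^sup>+\<omega>. H (it \<omega> t) \<partial>\<Omega>)"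
proof -
  define B where "B = (\<lambda>_::nat\<times>nat. measure_pmf (bernoulli_pmf (b / real n)))"
  define N where "N = (\<lambda>_::nat\<times>'d. density lborel (normal_density 0 \<sigma>))"
  define J1 where "J1 = {t} \<times> {0..<n}"
  define K1 where "K1 = {0..<T} \<times> {0..<n} - J1"
  define J2 where "J2 = {t} \<times> (UNIV::'d set)"
  define K2 where "K2 = {0..<T} \<times> (UNIV::'d set) - J2"
  have U1: "{0..<T} \<times> {0..<n} = K1 \<union> J1" using t by (auto simp: K1_def J1_def)
  have U2: "{0..<T} \<times> (UNIV::'d set) = K2 \<union> J2" using t by (auto simp: K2_def J2_def)
  have \<Omega>eq: "\<Omega> = PiM (K1 \<union> J1) B \<Otimes>\<^sub>M PiM (K2 \<union> J2) N"
    unfolding \<Omega>_def dpsgd_rand_def U1[symmetric] U2[symmetric] B_def N_def ..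
  have PB: "prob_space (B i)" for i by (simp add: B_def prob_space_measure_pmf)
  have PN: "prob_space (N i)" for i by (simp add: N_def prob_space_normal_density \<sigma>)
  interpret PJ1: prob_space "PiM J1 B" by (rule prob_space_PiM) (simp add: PB)
  interpret PJ2: prob_space "PiM J2 N" by (rule prob_space_PiM) (simp add: PN)
  have fin: "finite K1" "finite J1" "K1 \<inter> J1 = {}" "finite K2" "finite J2" "K2 \<inter> J2 = {}"
    by (auto simp: K1_def J1_def K2_def J2_def)
  define U where "U x1 x2 = it (x1, x2) t" for x1 x2
  have itm: "it (merge K1 J1 (x1, y1), merge K2 J2 (x2, y2)) t = U x1 x2" for x1 x2 y1 y2
    unfolding U_def it_def
    by (rule iter_local) (use t in \<open>auto simp: merge_def K1_def J1_def K2_def J2_def\<close>)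
  have fstm: "(\<lambda>i. merge K1 J1 (x1, y1) (t, i)) = (\<lambda>i. y1 (t, i))"
    if "y1 \<in> space (PiM J1 B)" for x1 x2 y1 y2
    using that by (auto simp: merge_def K1_def J1_def space_PiM PiE_def extensional_def fun_eq_iff)
  have sndm: "(\<lambda>j. merge K2 J2 (x2, y2) (t, j)) = (\<lambda>j. y2 (t, j))"
    for x1 x2 y1 y2
    by (auto simp: merge_def K2_def J2_def fun_eq_iff)
  have "(\<integral>\<^sup>+\<omega>. \<Phi> (it \<omega> t) (\<lambda>i. fst \<omega> (t, i)) (\<lambda>j. snd \<omega> (t, j)) \<partial>\<Omega>) =
    (\<integral>\<^sup>+x1. \<integral>\<^sup>+x2. \<integral>\<^sup>+y1. \<integral>\<^sup>+y2. \<Phi> (U x1 x2) (\<lambda>i. y1 (t, i)) (\<lambda>j. y2 (t, j))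
        \<partial>PiM J2 N \<partial>PiM J1 B \<partial>PiM K2 N \<partial>PiM K1 B)"
    unfolding \<Omega>eq
    apply (subst decomp4[OF PB PN fin])
    using Fm apply (simp add: \<Omega>eq)
    apply (intro nn_integral_cong)
    apply (simp add: itm fstm sndm)
    done
  also have "\<dots> \<le> (\<integral>\<^sup>+x1. \<integral>\<^sup>+x2. H (U x1 x2) \<partial>PiM K2 N \<partial>PiM K1 B)"
    apply (intro nn_integral_mono)
    apply (rule le[unfolded J1_def[symmetric] J2_def[symmetric] B_def[symmetric] N_def[symmetric]])
    unfolding U_def it_def using W by (rule iter_in_W)
  also have "\<dots> = (\<integral>\<^sup>+x1. \<integral>\<^sup>+x2. \<integral>\<^sup>+y1. \<integral>\<^sup>+y2. H (it (merge K1 J1 (x1, y1), merge K2 J2 (x2, y2)) t)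
        \<partial>PiM J2 N \<partial>PiM J1 B \<partial>PiM K2 N \<partial>PiM K1 B)"
    by (simp add: itm PJ1.emeasure_space_1 PJ2.emeasure_space_1)
  also have "\<dots> = (\<integral>\<^sup>+\<omega>. H (it \<omega> t) \<partial>\<Omega>)"
    unfolding \<Omega>eq
    apply (subst decomp4[OF PB PN fin])
    using Hm apply (simp add: \<Omega>eq)
    apply (rule refl)
    done
  finally show ?thesis .
qed


lemma PiM_comp_integral:
  fixes f :: "'a \<Rightarrow> real"
  assumes P: "\<And>i. i \<in> I \<Longrightarrow> prob_space (M i)" and i: "i \<in> I"
    and f: "f \<in> borel_measurable (M i)" "integrable (M i) f"
  shows "integrable (PiM I M) (\<lambda>x. f (x i))" "(\<integral>x. f (x i) \<partial>PiM I M) = integral\<^sup>L (M i) f"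
proof -
  have m: "(\<lambda>x. x i) \<in> measurable (PiM I M) (M i)" using i by (rule measurable_component_singleton)
  have d: "distr (PiM I M) (M i) (\<lambda>x. x i) = M i" by (rule distr_PiM_component[OF P i])
  show "integrable (PiM I M) (\<lambda>x. f (x i))"
    using integrable_distr_eq[OF m f(1)] f(2) d by simp
  show "(\<integral>x. f (x i) \<partial>PiM I M) = integral\<^sup>L (M i) f"
    using integral_distr[OF m f(1)] d by simp
qed

lemma gauss_facts:
  fixes \<sigma> :: real assumes \<sigma>: "0 < \<sigma>"
  shows "integrable (density lborel (normal_density 0 \<sigma>)) (\<lambda>x. x)"
    "(\<integral>x. x \<partial>density lborel (normal_density 0 \<sigma>)) = 0"
    "integrable (density lborel (normal_density 0 \<sigma>)) (\<lambda>x. x\<^sup>2)"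
    "(\<integral>x. x\<^sup>2 \<partial>density lborel (normal_density 0 \<sigma>)) = \<sigma>\<^sup>2"
proof -
  show "integrable (density lborel (normal_density 0 \<sigma>)) (\<lambda>x. x)"
    by (subst integrable_density) (use integrable_normal_moment_nz_1[OF \<sigma>, of 0] in auto)
  show "(\<integral>x. x \<partial>density lborel (normal_density 0 \<sigma>)) = 0"
    by (subst integral_density) (use integral_normal_moment_nz_1[OF \<sigma>, of 0] in auto)
  show "integrable (density lborel (normal_density 0 \<sigma>)) (\<lambda>x. x\<^sup>2)"
    by (subst integrable_density) (use \<sigma> integrable_normal_moment[where \<mu>=0 and \<sigma>=\<sigma> and k=2] in auto)
  show "(\<integral>x. x\<^sup>2 \<partial>density lborel (normal_density 0 \<sigma>)) = \<sigma>\<^sup>2"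
    by (subst integral_density) (use integral_normal_moment_even[OF \<sigma>, of 0 1] \<sigma> in \<open>auto simp: power2_eq_square\<close>)
qed

lemma norm_sq_vec: "(norm (x :: real^'d::finite))\<^sup>2 = (\<Sum>j\<in>UNIV. (x $ j)\<^sup>2)"
  unfolding power2_norm_eq_inner inner_vec_def by (simp add: power2_eq_square)

lemma gauss_step:
  fixes r :: "real^'d::finite" and \<sigma> \<eta> :: real and t :: nat
  assumes \<sigma>: "0 < \<sigma>"
  shows "(\<integral>\<^sup>+y. ennreal ((norm (r - \<eta> *\<^sub>R (\<chi> j. y (t, j))))\<^sup>2)
            \<partial>PiM ({t} \<times> (UNIV::'d set)) (\<lambda>_. density lborel (normal_density 0 \<sigma>)))
         = ennreal ((norm r)\<^sup>2 + \<eta>\<^sup>2 * real CARD('d) * \<sigma>\<^sup>2)"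
proof -
  let ?N = "PiM ({t} \<times> (UNIV::'d set)) (\<lambda>_. density lborel (normal_density 0 \<sigma>))"
  have P: "prob_space (density lborel (normal_density 0 \<sigma>))" by (simp add: prob_space_normal_density \<sigma>)
  interpret N: prob_space ?N by (rule prob_space_PiM) (simp add: P)
  have mem: "(t, j) \<in> {t} \<times> (UNIV::'d set)" for j by simp
  note c1 = PiM_comp_integral[OF P mem _ gauss_facts(1)[OF \<sigma>]]
  note c2 = PiM_comp_integral[OF P mem _ gauss_facts(3)[OF \<sigma>]]
  have eq: "(norm (r - \<eta> *\<^sub>R (\<chi> j. y (t, j))))\<^sup>2 =
     (norm r)\<^sup>2 + (\<Sum>j\<in>UNIV. (- 2 * \<eta> * r $ j) * y (t, j) + \<eta>\<^sup>2 * (y (t, j))\<^sup>2)" for y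
    by (simp add: norm_sq_vec sum.distrib[symmetric] power2_diff power_mult_distrib algebra_simps)
  have int: "integrable ?N (\<lambda>y. (- 2 * \<eta> * r $ j) * y (t, j) + \<eta>\<^sup>2 * (y (t, j))\<^sup>2)" for j
    using c1(1)[of j] c2(1)[of j] by auto
  have intn: "integrable ?N (\<lambda>y. (norm (r - \<eta> *\<^sub>R (\<chi> j. y (t, j))))\<^sup>2)"
    unfolding eq by (intro Bochner_Integration.integrable_add N.integrable_const) (rule Bochner_Integration.integrable_sum, rule int)
  have "(\<integral>\<^sup>+y. ennreal ((norm (r - \<eta> *\<^sub>R (\<chi> j. y (t, j))))\<^sup>2) \<partial>?N)
     = ennreal (\<integral>y. (norm (r - \<eta> *\<^sub>R (\<chi> j. y (t, j))))\<^sup>2 \<partial>?N)"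
    by (rule nn_integral_eq_integral[OF intn]) auto
  also have "(\<integral>y. (norm (r - \<eta> *\<^sub>R (\<chi> j. y (t, j))))\<^sup>2 \<partial>?N)
     = (\<integral>y. (norm r)\<^sup>2 + (\<Sum>j\<in>UNIV. (- 2 * \<eta> * r $ j) * y (t, j) + \<eta>\<^sup>2 * (y (t, j))\<^sup>2) \<partial>?N)"
    unfolding eq ..
  also have "(\<integral>y. (norm r)\<^sup>2 + (\<Sum>j\<in>UNIV. (- 2 * \<eta> * r $ j) * y (t, j) + \<eta>\<^sup>2 * (y (t, j))\<^sup>2) \<partial>?N)
      = (norm r)\<^sup>2 + (\<Sum>j\<in>UNIV. (- 2 * \<eta> * r $ j) * 0 + \<eta>\<^sup>2 * \<sigma>\<^sup>2)"
  proof -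
    have e1: "(\<integral>y. (- 2 * \<eta> * r $ j) * y (t, j) + \<eta>\<^sup>2 * (y (t, j))\<^sup>2 \<partial>?N) = (- 2 * \<eta> * r $ j) * 0 + \<eta>\<^sup>2 * \<sigma>\<^sup>2" for j
      apply (subst Bochner_Integration.integral_add)
      using c1(1)[of j] c2(1)[of j] apply auto[2]
      apply (simp add: c1(2) c2(2) gauss_facts[OF \<sigma>])
      done
    show ?thesis
      apply (subst Bochner_Integration.integral_add)
        apply (rule N.integrable_const)
       apply (rule Bochner_Integration.integrable_sum, rule int)
      apply (subst Bochner_Integration.integral_sum)
       apply (rule int)
      apply (simp only: e1 lebesgue_integral_const N.prob_space)
      apply simp
      done
  qed
  also have "\<dots> = (norm r)\<^sup>2 + \<eta>\<^sup>2 * real CARD('d) * \<sigma>\<^sup>2" by simp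
  finally show ?thesis .
qed


lemma bern_facts:
  fixes p :: real and t n :: nat
  assumes p: "0 \<le> p" "p \<le> 1"
  defines "PB \<equiv> PiM ({t} \<times> {0..<n}) (\<lambda>_. measure_pmf (bernoulli_pmf p))"
  assumes i: "i < n" and l: "l < n"
  shows "integrable PB (\<lambda>y. if y (t, i) then 1 else 0 :: real)"
    "(\<integral>y. (if y (t, i) then 1 else 0 :: real) \<partial>PB) = p"
    "integrable PB (\<lambda>y. (if y (t, i) then 1 else 0 :: real) * (if y (t, l) then 1 else 0))"
    "(\<integral>y. (if y (t, i) then 1 else 0 :: real) * (if y (t, l) then 1 else 0) \<partial>PB) = (if i = l then p else p\<^sup>2)"
proof -
  have P: "prob_space (measure_pmf (bernoulli_pmf p))" by (rule prob_space_measure_pmf)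
  interpret PB: prob_space PB unfolding PB_def by (rule prob_space_PiM) (simp add: P)
  interpret pB: product_sigma_finite "\<lambda>_::nat\<times>nat. measure_pmf (bernoulli_pmf p)"
    by (simp add: product_sigma_finite_def prob_space_imp_sigma_finite P)
  have mi: "(t, i) \<in> {t} \<times> {0..<n}" using i by simp
  have ml: "(t, l) \<in> {t} \<times> {0..<n}" using l by simp
  have m1[measurable]: "(\<lambda>y. y (t, i)) \<in> measurable PB (count_space UNIV)"
    using measurable_component_singleton[OF mi, of "\<lambda>_. measure_pmf (bernoulli_pmf p)"]
    unfolding PB_def by simp
  have m2[measurable]: "(\<lambda>y. y (t, l)) \<in> measurable PB (count_space UNIV)"
    using measurable_component_singleton[OF ml, of "\<lambda>_. measure_pmf (bernoulli_pmf p)"]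
    unfolding PB_def by simp
  show I1: "integrable PB (\<lambda>y. if y (t, i) then 1 else 0 :: real)"
    by (rule PB.integrable_const_bound[where B=1]) auto
  show I2: "integrable PB (\<lambda>y. (if y (t, i) then 1 else 0 :: real) * (if y (t, l) then 1 else 0))"
    by (rule PB.integrable_const_bound[where B=1]) auto
  show E1: "(\<integral>y. (if y (t, i) then 1 else 0 :: real) \<partial>PB) = p"
    unfolding PB_def
    by (subst PiM_comp_integral(2)[OF P mi]) (auto simp: p intro!: measure_pmf.integrable_const_bound[where B=1])
  show "(\<integral>y. (if y (t, i) then 1 else 0 :: real) * (if y (t, l) then 1 else 0) \<partial>PB) = (if i = l then p else p\<^sup>2)"
  proof (cases "i = l")
    case True
    have "(\<lambda>y. (if y (t, i) then 1 else 0 :: real) * (if y (t, l) then 1 else 0)) = (\<lambda>y. if y (t, i) then 1 else 0)"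
      using True by auto
    then show ?thesis using E1 True by simp
  next
    case False
    define f where "f k x = (if k = (t, i) \<or> k = (t, l) then (if x then 1 else 0) else 1 :: real)" for k x
    have pr: "(\<Prod>k\<in>{t} \<times> {0..<n}. g k) = g (t, i) * g (t, l)"
      if "\<And>k. k \<notin> {(t, i), (t, l)} \<Longrightarrow> g k = 1" for g :: "nat \<times> nat \<Rightarrow> real"
    proof -
      have "(\<Prod>k\<in>{t} \<times> {0..<n}. g k) = (\<Prod>k\<in>{(t, i), (t, l)}. g k)"
        by (rule prod.mono_neutral_right) (use mi ml that in auto)
      then show ?thesis using False by simp
    qed
    have "(\<integral>y. (if y (t, i) then 1 else 0 :: real) * (if y (t, l) then 1 else 0) \<partial>PB)
        = (\<integral>y. (\<Prod>k\<in>{t} \<times> {0..<n}. f k (y k)) \<partial>PB)"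
      by (rule Bochner_Integration.integral_cong) (use i l False in \<open>auto simp: pr f_def\<close>)
    also have "\<dots> = (\<Prod>k\<in>{t} \<times> {0..<n}. (\<integral>x. f k x \<partial>measure_pmf (bernoulli_pmf p)))"
      unfolding PB_def by (rule pB.product_integral_prod) (auto intro!: measure_pmf.integrable_const_bound[where B=1] simp: f_def)
    also have "\<dots> = p * p"
      by (subst pr) (auto simp: f_def p False)
    finally show ?thesis using False by (simp add: power2_eq_square)
  qed
qed


lemma double_sum_m:
  fixes a :: "nat \<Rightarrow> real^'d::finite" and p :: real
  shows "(\<Sum>i<n. \<Sum>l<n. (if i = l then p else p\<^sup>2) * (a i \<bullet> a l))
     = p\<^sup>2 * (norm (\<Sum>i<n. a i))\<^sup>2 + (p - p\<^sup>2) * (\<Sum>i<n. (norm (a i))\<^sup>2)"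
proof -
  have "(if i = l then p else p\<^sup>2) * (a i \<bullet> a l) = p\<^sup>2 * (a i \<bullet> a l) + (if i = l then (p - p\<^sup>2) * (a i \<bullet> a l) else 0)" for i l
    by (auto simp: algebra_simps)
  then have "(\<Sum>i<n. \<Sum>l<n. (if i = l then p else p\<^sup>2) * (a i \<bullet> a l))
     = (\<Sum>i<n. \<Sum>l<n. p\<^sup>2 * (a i \<bullet> a l)) + (\<Sum>i<n. \<Sum>l<n. (if i = l then (p - p\<^sup>2) * (a i \<bullet> a l) else 0))"
    by (simp add: sum.distrib)
  also have "(\<Sum>i<n. \<Sum>l<n. p\<^sup>2 * (a i \<bullet> a l)) = p\<^sup>2 * (norm (\<Sum>i<n. a i))\<^sup>2"
    apply (simp add: power2_norm_eq_inner inner_sum_left inner_sum_right sum_distrib_left)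
    apply (rule sum.swap)
    done
  also have "(\<Sum>i<n. \<Sum>l<n. (if i = l then (p - p\<^sup>2) * (a i \<bullet> a l) else 0)) = (p - p\<^sup>2) * (\<Sum>i<n. (norm (a i))\<^sup>2)"
    by (simp add: power2_norm_eq_inner sum_distrib_left)
  finally show ?thesis .
qed

lemma bern_alg:
  fixes a :: "nat \<Rightarrow> real^'d::finite" and v :: "real^'d" and \<eta> b \<tau> :: real
  assumes b: "1 \<le> b" "b \<le> real n" and a: "\<And>i. i < n \<Longrightarrow> norm (a i) \<le> \<tau>"
  defines "p \<equiv> b / real n"
  shows "(norm v)\<^sup>2 - 2 * \<eta> / b * (\<Sum>i<n. p * (v \<bullet> a i))
       + \<eta>\<^sup>2 / b\<^sup>2 * (\<Sum>i<n. \<Sum>l<n. (if i = l then p else p\<^sup>2) * (a i \<bullet> a l))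
     \<le> (norm v)\<^sup>2 - 2 * \<eta> * (v \<bullet> ((1 / real n) *\<^sub>R (\<Sum>i<n. a i))) + 2 * \<eta>\<^sup>2 * \<tau>\<^sup>2"
proof -
  have n: "real n > 0" using b by simp
  have p: "0 < p" "p \<le> 1" using b n by (auto simp: p_def)
  have "0 < n" using n by simp
  have t0: "0 \<le> \<tau>" using a[OF \<open>0 < n\<close>] norm_ge_zero[of "a 0"] by linarith
  have e1: "2 * \<eta> / b * (\<Sum>i<n. p * (v \<bullet> a i)) = 2 * \<eta> * (v \<bullet> ((1 / real n) *\<^sub>R (\<Sum>i<n. a i)))"
  proof -
    have "(\<Sum>i<n. p * (v \<bullet> a i)) = p * (v \<bullet> (\<Sum>i<n. a i))"
      by (simp add: inner_sum_right sum_distrib_left)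
    then show ?thesis using b n by (simp add: p_def field_simps)
  qed
  have S: "norm (\<Sum>i<n. a i) \<le> real n * \<tau>"
    using norm_sum[of a "{..<n}"] sum_mono[of "{..<n}" "\<lambda>i. norm (a i)" "\<lambda>_. \<tau>"] a by auto
  have S2: "(norm (\<Sum>i<n. a i))\<^sup>2 \<le> (real n * \<tau>)\<^sup>2"
    using S by (intro power_mono) auto
  have A2: "(\<Sum>i<n. (norm (a i))\<^sup>2) \<le> real n * \<tau>\<^sup>2"
  proof -
    have "(norm (a i))\<^sup>2 \<le> \<tau>\<^sup>2" if "i < n" for i using a[OF that] by (intro power_mono) auto
    then show ?thesis using sum_mono[of "{..<n}" "\<lambda>i. (norm (a i))\<^sup>2" "\<lambda>_. \<tau>\<^sup>2"] by auto
  qed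
  have "p\<^sup>2 * (norm (\<Sum>i<n. a i))\<^sup>2 + (p - p\<^sup>2) * (\<Sum>i<n. (norm (a i))\<^sup>2)
      \<le> p\<^sup>2 * (real n * \<tau>)\<^sup>2 + p * (real n * \<tau>\<^sup>2)"
  proof (rule add_mono)
    show "p\<^sup>2 * (norm (\<Sum>i<n. a i))\<^sup>2 \<le> p\<^sup>2 * (real n * \<tau>)\<^sup>2" using S2 by (simp add: mult_left_mono)
    have "(p - p\<^sup>2) * (\<Sum>i<n. (norm (a i))\<^sup>2) \<le> p * (\<Sum>i<n. (norm (a i))\<^sup>2)"
      by (intro mult_right_mono) (auto intro: sum_nonneg)
    also have "\<dots> \<le> p * (real n * \<tau>\<^sup>2)" using A2 p by (simp add: mult_left_mono)
    finally show "(p - p\<^sup>2) * (\<Sum>i<n. (norm (a i))\<^sup>2) \<le> p * (real n * \<tau>\<^sup>2)" .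
  qed
  also have "p\<^sup>2 * (real n * \<tau>)\<^sup>2 + p * (real n * \<tau>\<^sup>2) = b\<^sup>2 * \<tau>\<^sup>2 + b * \<tau>\<^sup>2"
    using n by (simp add: p_def power2_eq_square field_simps)
  also have "\<dots> \<le> 2 * b\<^sup>2 * \<tau>\<^sup>2"
  proof -
    have "b \<le> b\<^sup>2" using b by (simp add: power2_eq_square)
    then have "b * \<tau>\<^sup>2 \<le> b\<^sup>2 * \<tau>\<^sup>2" by (rule mult_right_mono) simp
    then show ?thesis by (simp add: mult.commute)
  qed
  finally have "\<eta>\<^sup>2 / b\<^sup>2 * (\<Sum>i<n. \<Sum>l<n. (if i = l then p else p\<^sup>2) * (a i \<bullet> a l)) \<le> \<eta>\<^sup>2 / b\<^sup>2 * (2 * b\<^sup>2 * \<tau>\<^sup>2)"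
    unfolding double_sum_m by (intro mult_left_mono) auto
  also have "\<dots> = 2 * \<eta>\<^sup>2 * \<tau>\<^sup>2" using b by (simp add: field_simps)
  finally show ?thesis using e1 by linarith
qed


lemma norm_sq_diff_scale:
  fixes v S :: "'a::real_inner"
  shows "(norm (v - c *\<^sub>R S))\<^sup>2 = (norm v)\<^sup>2 - 2 * c * (v \<bullet> S) + c\<^sup>2 * (S \<bullet> S)"
  unfolding power2_norm_eq_inner by (simp add: inner_diff_left inner_diff_right inner_commute power2_eq_square algebra_simps)

lemma bern_step:
  fixes a :: "nat \<Rightarrow> real^'d::finite" and v :: "real^'d" and \<eta> b \<tau> K :: real and t n :: nat
  assumes b: "1 \<le> b" "b \<le> real n" and a: "\<And>i. i < n \<Longrightarrow> norm (a i) \<le> \<tau>" and K: "0 \<le> K"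
  defines "PB \<equiv> PiM ({t} \<times> {0..<n}) (\<lambda>_. measure_pmf (bernoulli_pmf (b / real n)))"
  shows "(\<integral>\<^sup>+y. ennreal ((norm (v - \<eta> *\<^sub>R ((1 / b) *\<^sub>R (\<Sum>i<n. if y (t, i) then a i else 0))))\<^sup>2 + K) \<partial>PB)
     \<le> ennreal ((norm v)\<^sup>2 - 2 * \<eta> * (v \<bullet> ((1 / real n) *\<^sub>R (\<Sum>i<n. a i))) + 2 * \<eta>\<^sup>2 * \<tau>\<^sup>2 + K)"
proof -
  define p where "p = b / real n"
  have p: "0 \<le> p" "p \<le> 1" using b by (auto simp: p_def)
  interpret PB: prob_space PB unfolding PB_def by (rule prob_space_PiM) (simp add: prob_space_measure_pmf)
  define \<beta> where "\<beta> i y = (if y (t, i) then 1 else 0 :: real)" for i :: nat and y :: "nat \<times> nat \<Rightarrow> bool"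
  note bf = bern_facts[OF p[unfolded p_def], where t=t and n=n, folded PB_def]
  define Q where "Q y = (norm v)\<^sup>2 - 2 * \<eta> / b * (\<Sum>i<n. \<beta> i y * (v \<bullet> a i))
      + \<eta>\<^sup>2 / b\<^sup>2 * (\<Sum>i<n. \<Sum>l<n. (\<beta> i y * \<beta> l y) * (a i \<bullet> a l)) + K" for y
  have eq: "(norm (v - \<eta> *\<^sub>R ((1 / b) *\<^sub>R (\<Sum>i<n. if y (t, i) then a i else 0))))\<^sup>2 + K = Q y" for y
  proof -
    have "(\<Sum>i<n. if y (t, i) then a i else 0) = (\<Sum>i<n. \<beta> i y *\<^sub>R a i)"
      by (rule sum.cong) (auto simp: \<beta>_def)
    moreover have "v - \<eta> *\<^sub>R ((1 / b) *\<^sub>R S) = v - (\<eta> / b) *\<^sub>R S" for S :: "real^'d" by simp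
    ultimately show ?thesis
      unfolding Q_def norm_sq_diff_scale
      by (simp add: inner_sum_left inner_sum_right sum_distrib_left power_divide algebra_simps inner_commute power2_eq_square)
  qed
  have i1: "integrable PB (\<lambda>y. \<beta> i y * c)" if "i < n" for i c using bf(1)[OF that that] unfolding \<beta>_def by simp
  have i2: "integrable PB (\<lambda>y. (\<beta> i y * \<beta> l y) * c)" if "i < n" "l < n" for i l c using bf(3)[OF that] unfolding \<beta>_def by simp
  have e1: "(\<integral>y. \<beta> i y * c \<partial>PB) = p * c" if "i < n" for i c
    using bf(2)[OF that that] unfolding \<beta>_def p_def by simp
  have e2: "(\<integral>y. (\<Sum>l<n. (\<beta> i y * \<beta> l y) * (a i \<bullet> a l)) \<partial>PB) = (\<Sum>l<n. (if i = l then p else p\<^sup>2) * (a i \<bullet> a l))"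
    if "i < n" for i
    apply (subst Bochner_Integration.integral_sum)
     apply (rule i2; use that in simp)
    apply (rule sum.cong, rule refl)
    using bf(4)[OF that] unfolding \<beta>_def p_def by simp
  have s1: "(\<integral>y. (\<Sum>i<n. \<beta> i y * (v \<bullet> a i)) \<partial>PB) = (\<Sum>i<n. p * (v \<bullet> a i))"
    apply (subst Bochner_Integration.integral_sum)
     apply (rule i1; simp)
    apply (rule sum.cong, rule refl)
    apply (rule e1; simp)
    done
  have s2: "(\<integral>y. (\<Sum>i<n. \<Sum>l<n. (\<beta> i y * \<beta> l y) * (a i \<bullet> a l)) \<partial>PB) = (\<Sum>i<n. \<Sum>l<n. (if i = l then p else p\<^sup>2) * (a i \<bullet> a l))"
    apply (subst Bochner_Integration.integral_sum)
     apply (rule Bochner_Integration.integrable_sum, rule i2; simp)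
    apply (rule sum.cong, rule refl)
    apply (rule e2; simp)
    done
  have iQ: "integrable PB Q"
    unfolding Q_def
    by (intro Bochner_Integration.integrable_add Bochner_Integration.integrable_diff PB.integrable_const
        integrable_mult_right Bochner_Integration.integrable_sum i1 i2) auto
  have "(\<integral>\<^sup>+y. ennreal ((norm (v - \<eta> *\<^sub>R ((1 / b) *\<^sub>R (\<Sum>i<n. if y (t, i) then a i else 0))))\<^sup>2 + K) \<partial>PB)
      = ennreal (integral\<^sup>L PB Q)"
    unfolding eq by (rule nn_integral_eq_integral[OF iQ]) (auto simp: eq[symmetric] K)
  also have "integral\<^sup>L PB Q = (norm v)\<^sup>2 - 2 * \<eta> / b * (\<Sum>i<n. p * (v \<bullet> a i))
      + \<eta>\<^sup>2 / b\<^sup>2 * (\<Sum>i<n. \<Sum>l<n. (if i = l then p else p\<^sup>2) * (a i \<bullet> a l)) + K"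
    unfolding Q_def
    apply (subst Bochner_Integration.integral_add)
      apply (intro Bochner_Integration.integrable_add Bochner_Integration.integrable_diff PB.integrable_const
        integrable_mult_right Bochner_Integration.integrable_sum i1 i2; simp)
     apply (rule PB.integrable_const)
    apply (subst Bochner_Integration.integral_add)
      apply (intro Bochner_Integration.integrable_add Bochner_Integration.integrable_diff PB.integrable_const
        integrable_mult_right Bochner_Integration.integrable_sum i1 i2; simp)
     apply (intro integrable_mult_right Bochner_Integration.integrable_sum i1 i2; simp)
    apply (subst Bochner_Integration.integral_diff)
      apply (rule PB.integrable_const)
     apply (intro integrable_mult_right Bochner_Integration.integrable_sum i1 i2; simp)
    apply (subst integral_mult_right_zero)+
    apply (simp only: lebesgue_integral_const PB.prob_space)
    apply (simp add: s1 s2)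
    done
  also have "\<dots> \<le> (norm v)\<^sup>2 - 2 * \<eta> * (v \<bullet> ((1 / real n) *\<^sub>R (\<Sum>i<n. a i))) + 2 * \<eta>\<^sup>2 * \<tau>\<^sup>2 + K"
    using bern_alg[where a=a and \<tau>=\<tau> and v=v and \<eta>=\<eta> and b=b and n=n, OF b a, folded p_def] by linarith
  finally show ?thesis by (simp add: ennreal_leI)
qed


lemma norm_clip_le:
  assumes "0 \<le> c" shows "norm (clip z c) \<le> c"
proof (cases "z = 0")
  case True then show ?thesis using assms by (simp add: clip_def)
next
  case False
  then have nz: "norm z > 0" by simp
  show ?thesis
  proof (cases "c / norm z \<le> 1")
    case True
    then show ?thesis using nz assms by (simp add: clip_def min_def abs_of_nonneg)
  next
    case False
    then show ?thesis using nz assms by (simp add: clip_def min_def field_simps)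
  qed
qed

lemma norm_sub_clip_le:
  fixes z :: "'v::real_normed_vector"
  assumes c: "0 < c" and k: "1 < k" and zG: "norm z \<le> G"
  shows "norm (z - clip z c) \<le> G powr k / c powr (k - 1)"
proof (cases "norm z \<le> c")
  case True
  then have "clip z c = z"
    by (cases "z = 0") (auto simp: clip_def min_def field_simps)
  moreover have "0 \<le> G powr k / c powr (k - 1)" by simp
  ultimately show ?thesis by simp
next
  case False
  then have nz: "norm z > c" "norm z > 0" using c by auto
  have "z - clip z c = (1 - c / norm z) *\<^sub>R z"
    using nz by (simp add: clip_def min_def algebra_simps)
  then have "norm (z - clip z c) = (1 - c / norm z) * norm z"
    using nz by (simp add: abs_of_nonneg)
  also have "\<dots> \<le> norm z" using nz c by (simp add: field_simps)
  also have "norm z = norm z powr k / norm z powr (k - 1)"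
    using nz by (simp add: powr_diff)
  also have "\<dots> \<le> G powr k / c powr (k - 1)"
  proof (rule frac_le)
    show "0 \<le> G powr k" by simp
    show "norm z powr k \<le> G powr k" using zG nz k by (intro powr_mono2) auto
    show "0 < c powr (k - 1)" using c by simp
    show "c powr (k - 1) \<le> norm z powr (k - 1)" using nz c k by (intro powr_mono2) auto
  qed
  finally show ?thesis .
qed

lemma convex_grad_ineq:
  fixes f :: "'a::real_inner \<Rightarrow> real"
  assumes cvx: "convex_on W f" "convex W" and u: "u \<in> W" and x: "x \<in> W"
    and d: "(f has_derivative (\<lambda>h. g \<bullet> h)) (at u)"
  shows "g \<bullet> (x - u) \<le> f x - f u"
proof -
  define \<phi> where "\<phi> s = f (u + s *\<^sub>R (x - u))" for s :: real
  have "((\<lambda>s. u + s *\<^sub>R (x - u)) has_derivative (\<lambda>s. s *\<^sub>R (x - u))) (at 0)"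
    by (auto intro!: derivative_eq_intros)
  from has_derivative_compose[OF this, of f "\<lambda>h. g \<bullet> h"] d
  have "(\<phi> has_derivative (\<lambda>s. g \<bullet> (s *\<^sub>R (x - u)))) (at 0)"
    unfolding \<phi>_def o_def by simp
  moreover have "(\<lambda>s. g \<bullet> (s *\<^sub>R (x - u))) = (*) (g \<bullet> (x - u))"
    by (auto simp: fun_eq_iff)
  ultimately have "(\<phi> has_real_derivative (g \<bullet> (x - u))) (at 0)"
    by (simp add: has_field_derivative_def)
  hence L: "((\<lambda>h. (\<phi> (0 + h) - \<phi> 0) / h) \<longlongrightarrow> g \<bullet> (x - u)) (at 0)"
    by (simp add: DERIV_def)
  hence L': "((\<lambda>h. (\<phi> h - \<phi> 0) / h) \<longlongrightarrow> g \<bullet> (x - u)) (at_right 0)"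
    by (simp add: filterlim_at_split)
  have ev: "eventually (\<lambda>h. (\<phi> h - \<phi> 0) / h \<le> f x - f u) (at_right 0)"
  proof (rule eventually_at_rightI[of 0 1])
    fix s :: real assume s: "s \<in> {0<..<1}"
    have "u + s *\<^sub>R (x - u) = (1 - s) *\<^sub>R u + s *\<^sub>R x" by (simp add: algebra_simps)
    then have "\<phi> s \<le> (1 - s) * f u + s * f x"
      unfolding \<phi>_def using convex_onD[OF cvx(1), of s u x] u x s by auto
    then have "\<phi> s - \<phi> 0 \<le> s * (f x - f u)" by (simp add: \<phi>_def algebra_simps)
    then show "(\<phi> s - \<phi> 0) / s \<le> f x - f u" using s by (simp add: field_simps mult.commute)
  qed simp
  show ?thesis
    by (rule tendsto_le[OF _ tendsto_const L' ev]) simp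
qed

lemma step_combined:
  fixes a :: "nat \<Rightarrow> real^'d::finite" and u ws :: "real^'d" and \<eta> b \<tau> \<sigma> :: real and t n :: nat
  assumes b: "1 \<le> b" "b \<le> real n" and a: "\<And>i. i < n \<Longrightarrow> norm (a i) \<le> \<tau>" and \<sigma>: "0 < \<sigma>"
  shows "(\<integral>\<^sup>+y1. \<integral>\<^sup>+y2. ennreal ((norm (u - \<eta> *\<^sub>R ((1 / b) *\<^sub>R (\<Sum>i<n. if y1 (t, i) then a i else 0) + (\<chi> j. y2 (t, j))) - ws))\<^sup>2)
         \<partial>PiM ({t} \<times> UNIV) (\<lambda>_. density lborel (normal_density 0 \<sigma>))
         \<partial>PiM ({t} \<times> {0..<n}) (\<lambda>_. measure_pmf (bernoulli_pmf (b / real n))))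
     \<le> ennreal ((norm (u - ws))\<^sup>2 - 2 * \<eta> * ((u - ws) \<bullet> ((1 / real n) *\<^sub>R (\<Sum>i<n. a i))) + 2 * \<eta>\<^sup>2 * \<tau>\<^sup>2
           + \<eta>\<^sup>2 * real CARD('d) * \<sigma>\<^sup>2)"
proof -
  have eq: "u - \<eta> *\<^sub>R (X + N) - ws = ((u - ws) - \<eta> *\<^sub>R X) - \<eta> *\<^sub>R N" for X N :: "real^'d"
    by (simp add: algebra_simps)
  show ?thesis
    unfolding eq
    apply (subst gauss_step[OF \<sigma>])
    apply (rule bern_step[OF b a])
     apply simp_all
    done
qed


lemma prob_space_dpsgd_rand:
  assumes "0 < \<sigma>"
  shows "prob_space (dpsgd_rand n T b \<sigma> :: ((nat \<times> nat \<Rightarrow> bool) \<times> (nat \<times> 'd::finite \<Rightarrow> real)) measure)"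
  unfolding dpsgd_rand_def
  by (intro prob_space_pair prob_space_PiM) (auto simp: prob_space_measure_pmf prob_space_normal_density assms)

lemma norm_avg_clip_le:
  assumes "0 \<le> \<tau>"
  shows "norm ((1 / real n) *\<^sub>R (\<Sum>i<n. clip (g i) \<tau>)) \<le> \<tau>"
proof (cases "n = 0")
  case True then show ?thesis using assms by simp
next
  case False
  have "norm (\<Sum>i<n. clip (g i) \<tau>) \<le> (\<Sum>i<n. norm (clip (g i) \<tau>))" by (rule norm_sum)
  also have "\<dots> \<le> (\<Sum>i<n. \<tau>)" by (rule sum_mono) (rule norm_clip_le[OF assms])
  finally have "norm (\<Sum>i<n. clip (g i) \<tau>) \<le> real n * \<tau>" by simp
  then show ?thesis using False by (simp add: field_simps)
qed

lemma one_step: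
  fixes grad :: "real^'d::finite \<Rightarrow> 'z \<Rightarrow> real^'d" and Z :: "nat \<Rightarrow> 'z" and W :: "(real^'d) set"
    and w0 ws :: "real^'d" and \<eta> b \<tau> \<sigma> :: real and n T t :: nat
  defines "\<Omega> \<equiv> (dpsgd_rand n T b \<sigma> :: ((nat \<times> nat \<Rightarrow> bool) \<times> (nat \<times> 'd \<Rightarrow> real)) measure)"
  defines "it \<equiv> dpsgd_iter grad n Z W w0 (\<lambda>_. \<eta>) b \<tau>"
  defines "c \<equiv> (\<lambda>u. (1 / real n) *\<^sub>R (\<Sum>i<n. clip (grad u (Z i)) \<tau>))"
  assumes gm: "\<And>i. i < n \<Longrightarrow> (\<lambda>w. grad w (Z i)) \<in> borel_measurable borel"
    and W: "convex W" "closed W" "bounded W" "w0 \<in> W" "ws \<in> W"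
    and b: "1 \<le> b" "b \<le> real n" and \<tau>: "0 < \<tau>" and \<sigma>: "0 < \<sigma>" and t: "t < T"
  shows "(\<integral>\<omega>. (norm (it \<omega> (Suc t) - ws))\<^sup>2 \<partial>\<Omega>) \<le>
    (\<integral>\<omega>. (norm (it \<omega> t - ws))\<^sup>2 - 2 * \<eta> * (c (it \<omega> t) \<bullet> (it \<omega> t - ws))
         + (2 * \<eta>\<^sup>2 * \<tau>\<^sup>2 + \<eta>\<^sup>2 * real CARD('d) * \<sigma>\<^sup>2) \<partial>\<Omega>)"
proof -
  interpret P: prob_space \<Omega> unfolding \<Omega>_def by (rule prob_space_dpsgd_rand[OF \<sigma>])
  have Wne: "W \<noteq> {}" using W by auto
  have itW: "it \<omega> s \<in> W" for \<omega> s unfolding it_def by (rule iter_in_W) (use W in auto)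
  have itm[measurable]: "(\<lambda>\<omega>. it \<omega> s) \<in> borel_measurable \<Omega>" if "s \<le> T" for s
    unfolding it_def \<Omega>_def by (rule iter_meas[where n=n and Z=Z and grad=grad, OF gm W(1,2) Wne that])
  have itt[measurable]: "(\<lambda>\<omega>. it \<omega> t) \<in> borel_measurable \<Omega>" using itm[of t] t by simp
  have its[measurable]: "(\<lambda>\<omega>. it \<omega> (Suc t)) \<in> borel_measurable \<Omega>" using itm[of "Suc t"] t by simp
  define D where "D = diameter W"
  have dD: "norm (x - y) \<le> D" if "x \<in> W" "y \<in> W" for x y
    using diameter_bounded_bound[OF W(3) that] by (simp add: D_def dist_norm)
  have gmi[measurable]: "(\<lambda>\<omega>. grad (it \<omega> t) (Z i)) \<in> borel_measurable \<Omega>" if "i < n" for i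
    using measurable_compose[OF itt gm[OF that]] by simp
  have cm[measurable]: "(\<lambda>\<omega>. c (it \<omega> t)) \<in> borel_measurable \<Omega>"
    unfolding c_def by measurable
  have cn: "norm (c u) \<le> \<tau>" for u unfolding c_def by (rule norm_avg_clip_le) (use \<tau> in simp)
  define K where "K = 2 * \<eta>\<^sup>2 * \<tau>\<^sup>2 + \<eta>\<^sup>2 * real CARD('d) * \<sigma>\<^sup>2"
  define h where "h u = (norm (u - ws))\<^sup>2 - 2 * \<eta> * (c u \<bullet> (u - ws)) + K" for u
  have h0: "0 \<le> h u" for u
  proof -
    have "0 \<le> (norm ((u - ws) - \<eta> *\<^sub>R c u))\<^sup>2" by simp
    also have "\<dots> = (norm (u - ws))\<^sup>2 - 2 * \<eta> * ((u - ws) \<bullet> c u) + \<eta>\<^sup>2 * (c u \<bullet> c u)"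
      by (rule norm_sq_diff_scale)
    finally have 1: "0 \<le> (norm (u - ws))\<^sup>2 - 2 * \<eta> * (c u \<bullet> (u - ws)) + \<eta>\<^sup>2 * (c u \<bullet> c u)"
      by (simp add: inner_commute)
    have "c u \<bullet> c u \<le> \<tau>\<^sup>2" using cn[of u] by (simp add: power2_norm_eq_inner[symmetric] power_mono)
    then have "\<eta>\<^sup>2 * (c u \<bullet> c u) \<le> \<eta>\<^sup>2 * \<tau>\<^sup>2" by (simp add: mult_left_mono)
    moreover have "0 \<le> \<eta>\<^sup>2 * \<tau>\<^sup>2" "0 \<le> \<eta>\<^sup>2 * real CARD('d) * \<sigma>\<^sup>2" by simp_all
    ultimately show ?thesis using 1 unfolding h_def K_def by linarith
  qed
  have hm[measurable]: "(\<lambda>\<omega>. h (it \<omega> t)) \<in> borel_measurable \<Omega>"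
    unfolding h_def by measurable
  have hb: "norm (h (it \<omega> t)) \<le> D\<^sup>2 + 2 * \<bar>\<eta>\<bar> * \<tau> * D + \<bar>K\<bar>" for \<omega>
  proof -
    have n1: "norm (it \<omega> t - ws) \<le> D" using dD itW W by auto
    have "\<bar>c (it \<omega> t) \<bullet> (it \<omega> t - ws)\<bar> \<le> norm (c (it \<omega> t)) * norm (it \<omega> t - ws)"
      by (rule Cauchy_Schwarz_ineq2)
    also have "\<dots> \<le> \<tau> * D" using cn n1 \<tau> by (intro mult_mono) auto
    finally have 2: "\<bar>c (it \<omega> t) \<bullet> (it \<omega> t - ws)\<bar> \<le> \<tau> * D" .
    have 3: "(norm (it \<omega> t - ws))\<^sup>2 \<le> D\<^sup>2" using n1 by (intro power_mono) auto
    have "\<bar>2 * \<eta> * (c (it \<omega> t) \<bullet> (it \<omega> t - ws))\<bar> \<le> 2 * \<bar>\<eta>\<bar> * (\<tau> * D)"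
      using 2 by (simp add: abs_mult mult_left_mono)
    moreover have tri: "\<bar>a - x + k\<bar> \<le> \<bar>a\<bar> + \<bar>x\<bar> + \<bar>k\<bar>" for a x k :: real by arith
    ultimately have "norm (h (it \<omega> t)) \<le> \<bar>(norm (it \<omega> t - ws))\<^sup>2\<bar> + 2 * \<bar>\<eta>\<bar> * (\<tau> * D) + \<bar>K\<bar>"
      unfolding h_def real_norm_def using tri[of "(norm (it \<omega> t - ws))\<^sup>2" "2 * \<eta> * (c (it \<omega> t) \<bullet> (it \<omega> t - ws))" K]
      by linarith
    then show ?thesis using 3 by simp
  qed
  have hi: "integrable \<Omega> (\<lambda>\<omega>. h (it \<omega> t))"
    by (rule P.integrable_const_bound[where B="D\<^sup>2 + 2 * \<bar>\<eta>\<bar> * \<tau> * D + \<bar>K\<bar>"]) (use hb in auto)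
  have sm[measurable]: "(\<lambda>\<omega>. (norm (it \<omega> (Suc t) - ws))\<^sup>2) \<in> borel_measurable \<Omega>"
    by measurable
  have si: "integrable \<Omega> (\<lambda>\<omega>. (norm (it \<omega> (Suc t) - ws))\<^sup>2)"
  proof (rule P.integrable_const_bound[where B="D\<^sup>2"])
    show "AE \<omega> in \<Omega>. norm ((norm (it \<omega> (Suc t) - ws))\<^sup>2) \<le> D\<^sup>2"
      using dD[OF itW W(5)] by (auto intro!: power_mono)
  qed (rule sm)
  have fm[measurable]: "(\<lambda>\<omega>. fst \<omega> (t, i)) \<in> measurable \<Omega> (count_space UNIV)" if "i < n" for i
    unfolding \<Omega>_def using t that by (rule fst_comp_meas)
  have sm'[measurable]: "(\<lambda>\<omega>. snd \<omega> (t, j)) \<in> borel_measurable \<Omega>" for j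
    unfolding \<Omega>_def using t by (rule snd_comp_meas)
  define \<Phi> where "\<Phi> u \<beta> \<zeta> = ennreal ((norm (u - \<eta> *\<^sub>R ((1 / b) *\<^sub>R (\<Sum>i<n. if \<beta> i then clip (grad u (Z i)) \<tau> else 0) + (\<chi> j. \<zeta> j)) - ws))\<^sup>2)"
    for u \<beta> \<zeta>
  have Fm: "(\<lambda>\<omega>. \<Phi> (it \<omega> t) (\<lambda>i. fst \<omega> (t, i)) (\<lambda>j. snd \<omega> (t, j))) \<in> borel_measurable \<Omega>"
    unfolding \<Phi>_def by measurable
  have "ennreal (\<integral>\<omega>. (norm (it \<omega> (Suc t) - ws))\<^sup>2 \<partial>\<Omega>) = (\<integral>\<^sup>+\<omega>. ennreal ((norm (it \<omega> (Suc t) - ws))\<^sup>2) \<partial>\<Omega>)"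
    by (rule nn_integral_eq_integral[OF si, symmetric]) auto
  also have "\<dots> \<le> (\<integral>\<^sup>+\<omega>. \<Phi> (it \<omega> t) (\<lambda>i. fst \<omega> (t, i)) (\<lambda>j. snd \<omega> (t, j)) \<partial>\<Omega>)"
  proof (rule nn_integral_mono)
    fix \<omega>
    define x where "x = it \<omega> t - \<eta> *\<^sub>R ((1 / b) *\<^sub>R (\<Sum>i<n. if fst \<omega> (t, i) then clip (grad (it \<omega> t) (Z i)) \<tau> else 0) + (\<chi> j. snd \<omega> (t, j)))"
    have "it \<omega> (Suc t) = closest_point W x"
      unfolding it_def x_def dpsgd_iter_Suc' ..
    then have "norm (it \<omega> (Suc t) - ws) \<le> norm (x - ws)"
      using closest_point_lipschitz[OF W(1,2) Wne, of x ws] closest_point_self[OF W(5)]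
      by (simp add: dist_norm)
    then have "(norm (it \<omega> (Suc t) - ws))\<^sup>2 \<le> (norm (x - ws))\<^sup>2" by (intro power_mono) auto
    then show "ennreal ((norm (it \<omega> (Suc t) - ws))\<^sup>2) \<le> \<Phi> (it \<omega> t) (\<lambda>i. fst \<omega> (t, i)) (\<lambda>j. snd \<omega> (t, j))"
      unfolding \<Phi>_def x_def by simp
  qed
  also have "\<dots> \<le> (\<integral>\<^sup>+\<omega>. ennreal (h (it \<omega> t)) \<partial>\<Omega>)"
    unfolding \<Omega>_def it_def
  proof (rule step_le[OF t \<sigma> W(2,4)])
    show "(\<lambda>\<omega>. \<Phi> (dpsgd_iter grad n Z W w0 (\<lambda>_. \<eta>) b \<tau> \<omega> t) (\<lambda>i. fst \<omega> (t, i)) (\<lambda>j. snd \<omega> (t, j)))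
       \<in> borel_measurable (dpsgd_rand n T b \<sigma>)"
      using Fm by (simp add: it_def \<Omega>_def)
    show "(\<lambda>\<omega>. ennreal (h (dpsgd_iter grad n Z W w0 (\<lambda>_. \<eta>) b \<tau> \<omega> t))) \<in> borel_measurable (dpsgd_rand n T b \<sigma>)"
      using hm by (simp add: it_def \<Omega>_def)
    fix u assume u: "u \<in> W"
    show "(\<integral>\<^sup>+y1. \<integral>\<^sup>+y2. \<Phi> u (\<lambda>i. y1 (t, i)) (\<lambda>j. y2 (t, j))
         \<partial>PiM ({t} \<times> UNIV) (\<lambda>_. density lborel (normal_density 0 \<sigma>))
         \<partial>PiM ({t} \<times> {0..<n}) (\<lambda>_. measure_pmf (bernoulli_pmf (b / real n)))) \<le> ennreal (h u)"
      unfolding \<Phi>_def h_def K_def c_def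
      using step_combined[OF b _ \<sigma>, where a="\<lambda>i. clip (grad u (Z i)) \<tau>" and u=u and ws=ws and \<eta>=\<eta> and t=t and \<tau>=\<tau>]
      by (simp add: norm_clip_le \<tau> less_imp_le inner_commute add.assoc)
  qed
  also have "\<dots> = ennreal (\<integral>\<omega>. h (it \<omega> t) \<partial>\<Omega>)"
    by (rule nn_integral_eq_integral[OF hi]) (simp add: h0)
  finally show ?thesis
    unfolding h_def K_def by (simp add: integral_nonneg_AE h0[unfolded h_def K_def])
qed


lemma emp_obj_deriv:
  fixes loss :: "real^'d::finite \<Rightarrow> 'z \<Rightarrow> real"
  assumes grad: "\<And>w z. ((\<lambda>v. loss v z) has_derivative (\<lambda>h. grad w z \<bullet> h)) (at w)"
  shows "(emp_obj loss n Z has_derivative (\<lambda>h. ((1 / real n) *\<^sub>R (\<Sum>i<n. grad u (Z i))) \<bullet> h)) (at u)"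
proof -
  have "((\<lambda>v. \<Sum>i<n. loss v (Z i)) has_derivative (\<lambda>h. \<Sum>i<n. grad u (Z i) \<bullet> h)) (at u)"
    by (rule has_derivative_sum) (rule grad)
  then have "((\<lambda>v. (1 / real n) * (\<Sum>i<n. loss v (Z i))) has_derivative (\<lambda>h. (1 / real n) * (\<Sum>i<n. grad u (Z i) \<bullet> h))) (at u)"
    by (rule has_derivative_mult_right)
  moreover have "(\<lambda>h. (1 / real n) * (\<Sum>i<n. grad u (Z i) \<bullet> h)) = (\<lambda>h. ((1 / real n) *\<^sub>R (\<Sum>i<n. grad u (Z i))) \<bullet> h)"
    by (simp add: inner_sum_left fun_eq_iff)
  ultimately show ?thesis unfolding emp_obj_def[abs_def] by simp
qed

lemma sgd_bound:
  fixes loss :: "real^'d::finite \<Rightarrow> 'z \<Rightarrow> real" and grad :: "real^'d \<Rightarrow> 'z \<Rightarrow> real^'d"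
    and Z :: "nat \<Rightarrow> 'z" and W :: "(real^'d) set"
    and w0 ws :: "real^'d" and \<eta> b \<tau> \<sigma> \<beta> :: real and n T :: nat
  defines "\<Omega> \<equiv> (dpsgd_rand n T b \<sigma> :: ((nat \<times> nat \<Rightarrow> bool) \<times> (nat \<times> 'd \<Rightarrow> real)) measure)"
  defines "it \<equiv> dpsgd_iter grad n Z W w0 (\<lambda>_. \<eta>) b \<tau>"
  defines "f \<equiv> emp_obj loss n Z"
  defines "D \<equiv> diameter W"
  assumes grad: "\<And>w z. ((\<lambda>v. loss v z) has_derivative (\<lambda>h. grad w z \<bullet> h)) (at w)"
    and W: "convex W" "closed W" "bounded W" "w0 \<in> W" "ws \<in> W"
    and b: "1 \<le> b" "b \<le> real n" and \<tau>: "0 < \<tau>" and \<sigma>: "0 < \<sigma>" and \<eta>: "0 < \<eta>" and T: "1 \<le> T"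
    and fconv: "convex_on W f" and fmin: "\<And>w. w \<in> W \<Longrightarrow> f ws \<le> f w"
    and bias: "\<And>u. u \<in> W \<Longrightarrow> (1 / real n) * (\<Sum>i<n. norm (grad u (Z i) - clip (grad u (Z i)) \<tau>)) \<le> \<beta>"
  shows "(1 / real T) * (\<Sum>t<T. \<integral>\<omega>. f (it \<omega> t) \<partial>\<Omega>) - f ws
     \<le> D\<^sup>2 / (2 * \<eta> * real T) + \<eta> * (2 * \<tau>\<^sup>2 + real CARD('d) * \<sigma>\<^sup>2) / 2 + D * \<beta>"
proof -
  interpret P: prob_space \<Omega> unfolding \<Omega>_def by (rule prob_space_dpsgd_rand[OF \<sigma>])
  have Wne: "W \<noteq> {}" using W by auto
  have gm: "(\<lambda>w. grad w (Z i)) \<in> borel_measurable borel" for i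
    by (rule grad_measurable) (rule grad)
  have itW: "it \<omega> s \<in> W" for \<omega> s unfolding it_def by (rule iter_in_W) (use W in auto)
  have itm[measurable]: "(\<lambda>\<omega>. it \<omega> s) \<in> borel_measurable \<Omega>" if "s \<le> T" for s
    unfolding it_def \<Omega>_def by (rule iter_meas[where n=n and Z=Z and grad=grad, OF gm W(1,2) Wne that])
  have dD: "norm (x - y) \<le> D" if "x \<in> W" "y \<in> W" for x y
    using diameter_bounded_bound[OF W(3) that] by (simp add: D_def dist_norm)
  have D0: "0 \<le> D" using dD[OF W(5) W(5)] by simp
  define c where "c u = (1 / real n) *\<^sub>R (\<Sum>i<n. clip (grad u (Z i)) \<tau>)" for u
  define C where "C = 2 * \<tau>\<^sup>2 + real CARD('d) * \<sigma>\<^sup>2"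
  define E where "E t = (\<integral>\<omega>. (norm (it \<omega> t - ws))\<^sup>2 \<partial>\<Omega>)" for t
  have cn: "norm (c u) \<le> \<tau>" for u unfolding c_def by (rule norm_avg_clip_le) (use \<tau> in simp)
  have fd: "(f has_derivative (\<lambda>h. ((1 / real n) *\<^sub>R (\<Sum>i<n. grad u (Z i))) \<bullet> h)) (at u)" for u
    unfolding f_def by (rule emp_obj_deriv[OF grad])
  have fc: "continuous_on UNIV f"
    using fd has_derivative_continuous continuous_at_imp_continuous_on by blast
  have fm[measurable]: "f \<in> borel_measurable borel" by (rule borel_measurable_continuous_onI[OF fc])
  have "compact W" using W by (simp add: compact_eq_bounded_closed)
  then have "compact (f ` W)"
    using compact_continuous_image continuous_on_subset[OF fc subset_UNIV] by blast
  then obtain M where M: "\<And>u. u \<in> W \<Longrightarrow> norm (f u) \<le> M"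
    using compact_imp_bounded[of "f ` W"] by (auto simp: bounded_iff)
  have key: "f u - f ws \<le> c u \<bullet> (u - ws) + D * \<beta>" if u: "u \<in> W" for u
  proof -
    define g where "g = (1 / real n) *\<^sub>R (\<Sum>i<n. grad u (Z i))"
    have "g \<bullet> (ws - u) \<le> f ws - f u"
      by (rule convex_grad_ineq[OF fconv W(1) u W(5)]) (use fd in \<open>simp add: g_def\<close>)
    then have 1: "f u - f ws \<le> g \<bullet> (u - ws)" by (simp add: inner_diff_right)
    have "g - c u = (1 / real n) *\<^sub>R (\<Sum>i<n. grad u (Z i) - clip (grad u (Z i)) \<tau>)"
      by (simp add: g_def c_def sum_subtractf scaleR_diff_right)
    then have "norm (g - c u) \<le> (1 / real n) * (\<Sum>i<n. norm (grad u (Z i) - clip (grad u (Z i)) \<tau>))"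
      using norm_sum[of "\<lambda>i. grad u (Z i) - clip (grad u (Z i)) \<tau>" "{..<n}"]
      by (simp add: divide_right_mono)
    also have "\<dots> \<le> \<beta>" by (rule bias[OF u])
    finally have 2: "norm (g - c u) \<le> \<beta>" .
    have "(g - c u) \<bullet> (u - ws) \<le> norm (g - c u) * norm (u - ws)" by (rule norm_cauchy_schwarz)
    also have "\<dots> \<le> \<beta> * D"
    proof (rule mult_mono)
      show "0 \<le> \<beta>" using 2 norm_ge_zero[of "g - c u"] by linarith
    qed (use 2 dD[OF u W(5)] in auto)
    finally have 3: "(g - c u) \<bullet> (u - ws) \<le> \<beta> * D" .
    have "g \<bullet> (u - ws) = c u \<bullet> (u - ws) + (g - c u) \<bullet> (u - ws)" by (simp add: inner_diff_left)
    then show ?thesis using 1 3 by (simp add: mult.commute)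
  qed
  have Ni: "integrable \<Omega> (\<lambda>\<omega>. (norm (it \<omega> t - ws))\<^sup>2)" if "t \<le> T" for t
  proof (rule P.integrable_const_bound[where B="D\<^sup>2"])
    show "AE \<omega> in \<Omega>. norm ((norm (it \<omega> t - ws))\<^sup>2) \<le> D\<^sup>2"
      using dD[OF itW W(5)] by (auto intro!: power_mono)
    show "(\<lambda>\<omega>. (norm (it \<omega> t - ws))\<^sup>2) \<in> borel_measurable \<Omega>" using that by measurable
  qed
  have gmi[measurable]: "(\<lambda>\<omega>. grad (it \<omega> t) (Z i)) \<in> borel_measurable \<Omega>" if "t \<le> T" for i t
    using measurable_compose[OF itm[OF that] gm] by simp
  have Ci: "integrable \<Omega> (\<lambda>\<omega>. c (it \<omega> t) \<bullet> (it \<omega> t - ws))" if "t \<le> T" for t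
  proof (rule P.integrable_const_bound[where B="\<tau> * D"])
    show "AE \<omega> in \<Omega>. norm (c (it \<omega> t) \<bullet> (it \<omega> t - ws)) \<le> \<tau> * D"
    proof (rule AE_I2)
      fix \<omega>
      have "norm (c (it \<omega> t) \<bullet> (it \<omega> t - ws)) \<le> norm (c (it \<omega> t)) * norm (it \<omega> t - ws)"
        by (simp add: Cauchy_Schwarz_ineq2)
      also have "\<dots> \<le> \<tau> * D" using cn dD[OF itW W(5)] \<tau> by (intro mult_mono) auto
      finally show "norm (c (it \<omega> t) \<bullet> (it \<omega> t - ws)) \<le> \<tau> * D" .
    qed
    show "(\<lambda>\<omega>. c (it \<omega> t) \<bullet> (it \<omega> t - ws)) \<in> borel_measurable \<Omega>"
      using that unfolding c_def by measurable
  qed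
  have Fi: "integrable \<Omega> (\<lambda>\<omega>. f (it \<omega> t))" if "t \<le> T" for t
    by (rule P.integrable_const_bound[where B=M]) (use M itW that in auto)
  have stepI: "2 * \<eta> * ((\<integral>\<omega>. f (it \<omega> t) \<partial>\<Omega>) - f ws) \<le> E t - E (Suc t) + \<eta>\<^sup>2 * C + 2 * \<eta> * D * \<beta>"
    if t: "t < T" for t
  proof -
    have tT: "t \<le> T" using t by simp
    have os: "E (Suc t) \<le> (\<integral>\<omega>. (norm (it \<omega> t - ws))\<^sup>2 - 2 * \<eta> * (c (it \<omega> t) \<bullet> (it \<omega> t - ws))
         + (2 * \<eta>\<^sup>2 * \<tau>\<^sup>2 + \<eta>\<^sup>2 * real CARD('d) * \<sigma>\<^sup>2) \<partial>\<Omega>)"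
      unfolding E_def it_def \<Omega>_def c_def
      by (rule one_step[where n=n and Z=Z and grad=grad, OF gm W(1,2,3,4,5) b \<tau> \<sigma> t])
    also have "\<dots> = E t - 2 * \<eta> * (\<integral>\<omega>. c (it \<omega> t) \<bullet> (it \<omega> t - ws) \<partial>\<Omega>) + \<eta>\<^sup>2 * C"
    proof -
      have i2: "integrable \<Omega> (\<lambda>\<omega>. 2 * \<eta> * (c (it \<omega> t) \<bullet> (it \<omega> t - ws)))"
        using Ci[OF tT] by simp
      have i1: "integrable \<Omega> (\<lambda>\<omega>. (norm (it \<omega> t - ws))\<^sup>2 - 2 * \<eta> * (c (it \<omega> t) \<bullet> (it \<omega> t - ws)))"
        using Ni[OF tT] i2 by simp
      show ?thesis
        unfolding E_def C_def
        apply (subst Bochner_Integration.integral_add[OF i1 P.integrable_const])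
        apply (subst Bochner_Integration.integral_diff[OF Ni[OF tT] i2])
        apply (subst integral_mult_right_zero)
        apply (simp add: P.prob_space algebra_simps)
        done
    qed
    finally have A: "2 * \<eta> * (\<integral>\<omega>. c (it \<omega> t) \<bullet> (it \<omega> t - ws) \<partial>\<Omega>) \<le> E t - E (Suc t) + \<eta>\<^sup>2 * C"
      by linarith
    have "(\<integral>\<omega>. f (it \<omega> t) \<partial>\<Omega>) - f ws = (\<integral>\<omega>. f (it \<omega> t) - f ws \<partial>\<Omega>)"
      using Fi[OF tT] by (simp add: P.prob_space)
    also have "\<dots> \<le> (\<integral>\<omega>. c (it \<omega> t) \<bullet> (it \<omega> t - ws) + D * \<beta> \<partial>\<Omega>)"
      by (rule integral_mono) (use Fi[OF tT] Ci[OF tT] key itW in auto)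
    also have "\<dots> = (\<integral>\<omega>. c (it \<omega> t) \<bullet> (it \<omega> t - ws) \<partial>\<Omega>) + D * \<beta>"
      using Ci[OF tT] by (simp add: P.prob_space)
    finally have B: "(\<integral>\<omega>. f (it \<omega> t) \<partial>\<Omega>) - f ws \<le> (\<integral>\<omega>. c (it \<omega> t) \<bullet> (it \<omega> t - ws) \<partial>\<Omega>) + D * \<beta>" .
    have "2 * \<eta> * ((\<integral>\<omega>. f (it \<omega> t) \<partial>\<Omega>) - f ws) \<le> 2 * \<eta> * ((\<integral>\<omega>. c (it \<omega> t) \<bullet> (it \<omega> t - ws) \<partial>\<Omega>) + D * \<beta>)"
      using B \<eta> by (intro mult_left_mono) auto
    then show ?thesis using A by (simp add: algebra_simps)
  qed
  have "(\<Sum>t<T. 2 * \<eta> * ((\<integral>\<omega>. f (it \<omega> t) \<partial>\<Omega>) - f ws)) \<le> (\<Sum>t<T. E t - E (Suc t) + \<eta>\<^sup>2 * C + 2 * \<eta> * D * \<beta>)"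
    by (rule sum_mono) (rule stepI; simp)
  also have "\<dots> = E 0 - E T + real T * (\<eta>\<^sup>2 * C + 2 * \<eta> * D * \<beta>)"
  proof -
    have "(\<Sum>t<T. E t - E (Suc t) + \<eta>\<^sup>2 * C + 2 * \<eta> * D * \<beta>)
        = (\<Sum>t<T. E t - E (Suc t)) + real T * (\<eta>\<^sup>2 * C + 2 * \<eta> * D * \<beta>)"
      by (simp add: sum.distrib add.assoc)
    then show ?thesis by (simp add: sum_lessThan_telescope')
  qed
  also have "\<dots> \<le> D\<^sup>2 + real T * (\<eta>\<^sup>2 * C + 2 * \<eta> * D * \<beta>)"
  proof -
    have "E 0 = (norm (w0 - ws))\<^sup>2" unfolding E_def it_def by (simp add: P.prob_space)
    also have "\<dots> \<le> D\<^sup>2" using dD[OF W(4) W(5)] by (intro power_mono) auto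
    finally have "E 0 \<le> D\<^sup>2" .
    moreover have "0 \<le> E T" unfolding E_def by (rule integral_nonneg_AE) simp
    ultimately show ?thesis by simp
  qed
  finally have S: "2 * \<eta> * ((\<Sum>t<T. \<integral>\<omega>. f (it \<omega> t) \<partial>\<Omega>) - real T * f ws) \<le> D\<^sup>2 + real T * (\<eta>\<^sup>2 * C + 2 * \<eta> * D * \<beta>)"
    by (simp add: sum_distrib_left[symmetric] sum_subtractf algebra_simps)
  have Tp: "0 < real T" using T by simp
  have "(1 / real T) * (\<Sum>t<T. \<integral>\<omega>. f (it \<omega> t) \<partial>\<Omega>) - f ws = ((\<Sum>t<T. \<integral>\<omega>. f (it \<omega> t) \<partial>\<Omega>) - real T * f ws) / real T"
    using Tp by (simp add: field_simps)
  also have "\<dots> \<le> (D\<^sup>2 + real T * (\<eta>\<^sup>2 * C + 2 * \<eta> * D * \<beta>)) / (2 * \<eta>) / real T"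
  proof (rule divide_right_mono)
    show "(\<Sum>t<T. \<integral>\<omega>. f (it \<omega> t) \<partial>\<Omega>) - real T * f ws \<le> (D\<^sup>2 + real T * (\<eta>\<^sup>2 * C + 2 * \<eta> * D * \<beta>)) / (2 * \<eta>)"
      using S \<eta> by (subst pos_le_divide_eq) (auto simp: mult.commute)
  qed (use Tp in simp)
  also have "\<dots> = D\<^sup>2 / (2 * \<eta> * real T) + \<eta> * C / 2 + D * \<beta>"
    using \<eta> Tp by (simp add: field_simps power2_eq_square)
  finally show ?thesis unfolding C_def .
qed


lemma arith_main:
  fixes D G \<gamma> k s T \<phi> :: real
  assumes k: "1 < k" and G: "0 < G" and \<gamma>: "0 < \<gamma>" and T: "1 \<le> T" and s: "s = 1 / T + \<phi>\<^sup>2" and D: "0 < D"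
  defines "\<tau> \<equiv> G / \<gamma> powr (1 / k) * s powr (- 1 / (2 * k))"
  defines "\<eta> \<equiv> D / (T * \<tau>) * s powr (- 1 / 2)"
  shows "D\<^sup>2 / (2 * \<eta> * T) + \<eta> * (2 * \<tau>\<^sup>2 + T * \<tau>\<^sup>2 * \<phi>\<^sup>2) / 2 + D * (G powr k / (\<gamma> * \<tau> powr (k - 1)))
     \<le> 5 * D * G / (2 * \<gamma> powr (1 / k)) * s powr ((1 - 1 / k) / 2)"
proof -
  have s0: "0 < s" using s T by (auto intro!: add_pos_nonneg)
  have T0: "0 < T" using T by simp
  define r where "r = s powr (1 / 2)"
  have r0: "0 < r" using s0 by (simp add: r_def)
  have r2: "r * r = s" using s0 by (simp add: r_def powr_add[symmetric])
  have sm: "s powr (- 1 / 2) = 1 / r" using s0 by (simp add: r_def powr_minus inverse_eq_divide)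
  have \<tau>0: "0 < \<tau>" using G \<gamma> s0 by (simp add: \<tau>_def)
  define Q where "Q = G / \<gamma> powr (1 / k) * s powr ((1 - 1 / k) / 2)"
  have Q0: "0 < Q" using G \<gamma> s0 by (simp add: Q_def)
  have lt: "ln \<tau> = ln G - (1 / k) * ln \<gamma> + (- 1 / (2 * k)) * ln s"
    using G \<gamma> s0 by (simp add: \<tau>_def ln_mult ln_div)
  have lQ: "ln Q = ln G - (1 / k) * ln \<gamma> + ((1 - 1 / k) / 2) * ln s"
    using G \<gamma> s0 by (simp add: Q_def ln_mult ln_div)
  have a: "\<tau> * r = Q"
  proof -
    have "ln (\<tau> * r) = ln Q"
      using \<tau>0 r0 k by (simp add: ln_mult lt lQ r_def s0 field_simps)
    then show ?thesis using \<tau>0 r0 Q0 by simp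
  qed
  have b: "G powr k / (\<gamma> * \<tau> powr (k - 1)) = Q"
  proof -
    have "ln (G powr k / (\<gamma> * \<tau> powr (k - 1))) = ln Q"
      using \<tau>0 G \<gamma> k by (simp add: ln_mult ln_div lt lQ field_simps)
    then show ?thesis using \<tau>0 G \<gamma> Q0 by simp
  qed
  have \<eta>: "\<eta> = D / (T * \<tau> * r)" unfolding \<eta>_def sm by simp
  have c: "D\<^sup>2 / (2 * \<eta> * T) = D * (\<tau> * r) / 2"
    using D T0 \<tau>0 r0 unfolding \<eta> by (simp add: field_simps power2_eq_square)
  have d: "\<eta> * (2 * \<tau>\<^sup>2 + T * \<tau>\<^sup>2 * \<phi>\<^sup>2) / 2 \<le> D * (\<tau> * r)"
  proof -
    have "\<eta> * (2 * \<tau>\<^sup>2 + T * \<tau>\<^sup>2 * \<phi>\<^sup>2) / 2 = D * \<tau> * (2 / T + \<phi>\<^sup>2) / (2 * r)"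
      using D T0 \<tau>0 r0 unfolding \<eta> by (simp add: field_simps power2_eq_square)
    also have "\<dots> \<le> D * \<tau> * (2 * s) / (2 * r)"
    proof -
      have "2 / T + \<phi>\<^sup>2 \<le> 2 * s" using s by simp
      then show ?thesis using D \<tau>0 r0 by (intro divide_right_mono mult_left_mono) auto
    qed
    also have "\<dots> = D * (\<tau> * r)" using r0 r2[symmetric] by (simp add: field_simps)
    finally show ?thesis .
  qed
  have "D\<^sup>2 / (2 * \<eta> * T) + \<eta> * (2 * \<tau>\<^sup>2 + T * \<tau>\<^sup>2 * \<phi>\<^sup>2) / 2 + D * (G powr k / (\<gamma> * \<tau> powr (k - 1)))
      \<le> D * Q / 2 + D * Q + D * Q" using c d a b by simp
  also have "\<dots> = 5 * D * G / (2 * \<gamma> powr (1 / k)) * s powr ((1 - 1 / k) / 2)"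
    by (simp add: Q_def field_simps)
  finally show ?thesis .
qed


lemma arith_second_aux:
  fixes A B X Y Z :: real
  assumes "A * B = 2" "0 < B"
  shows "X / (2 * Y) * (A * Z) = X / (B * Y) * Z"
proof -
  have "A = 2 / B" using assms by (simp add: field_simps)
  then show ?thesis using assms by (cases "Y = 0") (simp_all add: field_simps)
qed

lemma arith_second:
  fixes D G \<gamma> k \<phi> :: real
  assumes \<phi>: "0 < \<phi>"
  shows "5 * D * G / (2 * \<gamma> powr (1 / k)) * (\<phi>\<^sup>2 + \<phi>\<^sup>2) powr ((1 - 1 / k) / 2)
    = 5 * D * G / (2 powr ((1 + 1 / k) / 2) * \<gamma> powr (1 / k)) * \<phi> powr (1 - 1 / k)"
proof -
  have e1: "\<phi>\<^sup>2 + \<phi>\<^sup>2 = 2 * \<phi> powr 2" using \<phi> by (simp add: powr_realpow)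
  have "(\<phi>\<^sup>2 + \<phi>\<^sup>2) powr ((1 - 1 / k) / 2) = 2 powr ((1 - 1 / k) / 2) * (\<phi> powr 2) powr ((1 - 1 / k) / 2)"
    unfolding e1 using \<phi> by (auto intro: powr_mult)
  also have "(\<phi> powr 2) powr ((1 - 1 / k) / 2) = \<phi> powr (1 - 1 / k)"
  proof -
    have e: "2 * ((1 - 1 / k) / 2) = 1 - 1 / (k::real)" by simp
    show ?thesis unfolding powr_powr e ..
  qed
  finally have 1: "(\<phi>\<^sup>2 + \<phi>\<^sup>2) powr ((1 - 1 / k) / 2) = 2 powr ((1 - 1 / k) / 2) * \<phi> powr (1 - 1 / k)" .
  have "2 powr ((1 - 1 / k) / 2) * 2 powr ((1 + 1 / k) / 2) = (2::real) powr ((1 - 1 / k) / 2 + (1 + 1 / k) / 2)"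
    by (rule powr_add[symmetric])
  also have "(1 - 1 / k) / 2 + (1 + 1 / k) / 2 = (1::real)" by (simp add: field_simps)
  finally have 2: "2 powr ((1 - 1 / k) / 2) * 2 powr ((1 + 1 / k) / 2) = (2::real)" by simp
  show ?thesis unfolding 1
    by (rule arith_second_aux[OF 2]) simp
qed


lemma main_core:
  fixes Dist :: "'z measure"
    and loss :: "real^'d::finite \<Rightarrow> 'z \<Rightarrow> real"
    and grad :: "real^'d \<Rightarrow> 'z \<Rightarrow> real^'d"
    and W :: "(real^'d) set"
    and Gf :: "'z \<Rightarrow> real"
    and k G \<gamma> \<epsilon> \<delta> \<nu> b :: real
    and n T :: nat
    and w0 :: "real^'d"
    and \<phi> DW \<tau> \<eta> \<sigma>sq :: real
  assumes D_prob: "prob_space Dist"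
    and grad: "\<And>w z. ((\<lambda>v. loss v z) has_derivative (\<lambda>h. grad w z \<bullet> h)) (at w)"
    and W_bounded: "bounded W" and W_convex: "convex W" and W_closed: "closed W"
    and w0: "w0 \<in> W"
    and Gf_nonneg: "\<And>z. Gf z \<ge> 0"
    and Gf_meas: "Gf \<in> borel_measurable Dist"
    and Gf_bound: "AE z in Dist. \<forall>w\<in>W. norm (grad w z) \<le> Gf z"
    and k: "k > 1" and G: "G > 0"
    and Gf_int: "integrable Dist (\<lambda>z. Gf z powr k)"
    and Gf_moment: "(\<integral>z. Gf z powr k \<partial>Dist) powr (1 / k) \<le> G"
    and n: "n \<ge> 1"
    and f_convex: "\<And>Z. Z \<in> space (PiM {0..<n} (\<lambda>_. Dist)) \<Longrightarrow> convex_on W (emp_obj loss n Z)"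
    and \<gamma>: "0 < \<gamma>" "\<gamma> < 1"
    and T: "T \<ge> 1"
    and \<epsilon>: "\<epsilon> > 0" and \<delta>: "0 < \<delta>" "\<delta> < 1" and \<nu>: "\<nu> > 0"
    and b: "1 \<le> b" "b \<le> real n"
    and \<phi>d: "\<phi> = sqrt (\<nu> * real CARD('d) * ln (1 / \<delta>)) / (real n * \<epsilon>)"
    and DWd: "DW = diameter W"
    and \<tau>d: "\<tau> = G / \<gamma> powr (1 / k) * (1 / real T + \<phi>\<^sup>2) powr (- 1 / (2 * k))"
    and \<eta>d: "\<eta> = DW / (real T * \<tau>) * (1 / real T + \<phi>\<^sup>2) powr (- 1 / 2)"
    and \<sigma>d: "\<sigma>sq = \<nu> * real T * ln (1 / \<delta>) * \<tau>\<^sup>2 / ((real n)\<^sup>2 * \<epsilon>\<^sup>2)"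
  shows "\<exists>A \<in> sets (PiM {0..<n} (\<lambda>_. Dist)).
          measure (PiM {0..<n} (\<lambda>_. Dist)) A \<ge> 1 - \<gamma> \<and>
          (\<forall>Z\<in>A. \<forall>ws\<in>W. (\<forall>w\<in>W. emp_obj loss n Z ws \<le> emp_obj loss n Z w) \<longrightarrow>
             (1 / real T) * (\<Sum>t<T. \<integral>\<omega>. emp_obj loss n Z
                  (dpsgd_iter grad n Z W w0 (\<lambda>_. \<eta>) b \<tau> \<omega> t) \<partial>(dpsgd_rand n T b (sqrt \<sigma>sq) :: ((nat \<times> nat \<Rightarrow> bool) \<times> (nat \<times> 'd \<Rightarrow> real)) measure)) - emp_obj loss n Z ws
               \<le> 5 * DW * G / (2 * \<gamma> powr (1 / k)) * (1 / real T + \<phi>\<^sup>2) powr ((1 - 1 / k) / 2)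
             \<and> (real T = 1 / \<phi>\<^sup>2 \<longrightarrow>
                (1 / real T) * (\<Sum>t<T. \<integral>\<omega>. emp_obj loss n Z
                  (dpsgd_iter grad n Z W w0 (\<lambda>_. \<eta>) b \<tau> \<omega> t) \<partial>(dpsgd_rand n T b (sqrt \<sigma>sq) :: ((nat \<times> nat \<Rightarrow> bool) \<times> (nat \<times> 'd \<Rightarrow> real)) measure)) - emp_obj loss n Z ws
                \<le> 5 * DW * G / (2 powr ((1 + 1 / k) / 2) * \<gamma> powr (1 / k)) * \<phi> powr (1 - 1 / k)))"
proof -
  let ?PZ = "PiM {0..<n} (\<lambda>_. Dist)"
  let ?\<Omega> = "dpsgd_rand n T b (sqrt \<sigma>sq) :: ((nat \<times> nat \<Rightarrow> bool) \<times> (nat \<times> 'd \<Rightarrow> real)) measure"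
  interpret Dp: prob_space Dist by (rule D_prob)
  interpret PZ: prob_space ?PZ by (rule prob_space_PiM) (simp add: D_prob)
  have ln0: "0 < ln (1 / \<delta>)" using \<delta> by simp
  have n0: "0 < real n" using n by simp
  have \<phi>0: "0 < \<phi>" unfolding \<phi>d using \<nu> ln0 n0 \<epsilon> by (intro divide_pos_pos real_sqrt_gt_zero mult_pos_pos) auto
  have \<phi>2: "\<phi>\<^sup>2 = \<nu> * real CARD('d) * ln (1 / \<delta>) / ((real n)\<^sup>2 * \<epsilon>\<^sup>2)"
    unfolding \<phi>d using \<nu> ln0 by (simp add: power_divide power_mult_distrib)
  define s where "s = 1 / real T + \<phi>\<^sup>2"
  have s0: "0 < s" unfolding s_def using T by (auto intro!: add_pos_nonneg)
  have \<tau>0: "0 < \<tau>" unfolding \<tau>d using G \<gamma> s0 by (simp add: s_def[symmetric])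
  have \<sigma>sq0: "0 < \<sigma>sq" unfolding \<sigma>d using \<nu> T ln0 \<tau>0 n0 \<epsilon> by (intro divide_pos_pos mult_pos_pos) auto
  have \<sigma>0: "0 < sqrt \<sigma>sq" using \<sigma>sq0 by simp
  have card\<sigma>: "real CARD('d) * (sqrt \<sigma>sq)\<^sup>2 = real T * \<tau>\<^sup>2 * \<phi>\<^sup>2"
    using \<sigma>sq0 unfolding \<phi>2 \<sigma>d by simp
  have DW0: "0 \<le> DW" unfolding DWd by (rule diameter_ge_0[OF W_bounded])
  define m where "m = (\<integral>z. Gf z powr k \<partial>Dist)"
  have m0: "0 \<le> m" unfolding m_def by (rule integral_nonneg_AE) simp
  have mG: "m \<le> G powr k"
  proof -
    have "m = (m powr (1 / k)) powr k" using m0 k by (simp add: powr_powr)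
    also have "\<dots> \<le> G powr k" using Gf_moment k m0 unfolding m_def by (intro powr_mono2) auto
    finally show ?thesis .
  qed
  define Y where "Y Z = (1 / real n) * (\<Sum>i<n. Gf (Z i) powr k)" for Z :: "nat \<Rightarrow> 'z"
  have Gfk_meas: "(\<lambda>z. Gf z powr k) \<in> borel_measurable Dist" using Gf_meas by measurable
  have comp: "integrable ?PZ (\<lambda>Z. Gf (Z i) powr k)" "(\<integral>Z. Gf (Z i) powr k \<partial>?PZ) = m" if "i < n" for i
    using PiM_comp_integral[of "{0..<n}" "\<lambda>_. Dist" i "\<lambda>z. Gf z powr k", OF D_prob _ Gfk_meas Gf_int] that
    by (auto simp: m_def)
  have Yi: "integrable ?PZ Y" unfolding Y_def
    by (intro integrable_mult_right Bochner_Integration.integrable_sum comp(1)) simp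
  have YE: "(\<integral>Z. Y Z \<partial>?PZ) = m"
    unfolding Y_def using comp n0 by (simp add: Bochner_Integration.integral_sum)
  have Ym[measurable]: "Y \<in> borel_measurable ?PZ" using Yi by (rule borel_measurable_integrable)
  define c where "c = G powr k / \<gamma>"
  have c0: "0 < c" unfolding c_def using G \<gamma> by simp
  have Mk: "measure ?PZ {Z \<in> space ?PZ. c \<le> Y Z} \<le> m / c"
  proof -
    have "0 \<le> Y Z" for Z unfolding Y_def by (intro mult_nonneg_nonneg sum_nonneg) auto
    then have "AE Z in ?PZ. 0 \<le> Y Z" by simp
    from integral_Markov_inequality_measure[OF Yi sets.top this c0]
    show ?thesis using YE by simp
  qed
  have mc: "m / c \<le> \<gamma>" unfolding c_def using mG \<gamma> G by (simp add: field_simps)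
  define A0 where "A0 = space ?PZ - {Z \<in> space ?PZ. c \<le> Y Z}"
  have A0s: "A0 \<in> sets ?PZ" unfolding A0_def by measurable
  have A0m: "1 - \<gamma> \<le> measure ?PZ A0"
    unfolding A0_def using PZ.prob_compl[of "{Z \<in> space ?PZ. c \<le> Y Z}"] Mk mc by simp
  have AEg: "AE Z in ?PZ. \<forall>i\<in>{0..<n}. \<forall>w\<in>W. norm (grad w (Z i)) \<le> Gf (Z i)"
    by (rule AE_finite_allI) (auto intro!: AE_PiM_component D_prob Gf_bound)
  then obtain N where N: "{Z \<in> space ?PZ. \<not> (\<forall>i\<in>{0..<n}. \<forall>w\<in>W. norm (grad w (Z i)) \<le> Gf (Z i))} \<subseteq> N"
    "emeasure ?PZ N = 0" "N \<in> sets ?PZ"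
    by (rule AE_E)
  define A where "A = A0 - N"
  have As: "A \<in> sets ?PZ" unfolding A_def using A0s N(3) by auto
  have Am: "1 - \<gamma> \<le> measure ?PZ A"
    unfolding A_def using measure_Diff_null_set[OF A0s null_setsI[OF N(2) N(3)]] A0m by simp
  show ?thesis
  proof (intro bexI[OF _ As] conjI ballI impI)
    show "1 - \<gamma> \<le> measure ?PZ A" by (rule Am)
  next
    fix Z ws assume Z: "Z \<in> A" and ws: "ws \<in> W" and wmin: "\<forall>w\<in>W. emp_obj loss n Z ws \<le> emp_obj loss n Z w"
    have Zsp: "Z \<in> space ?PZ" using Z unfolding A_def A0_def by auto
    have YZ: "Y Z < c" using Z unfolding A_def A0_def by auto
    have gb: "norm (grad w (Z i)) \<le> Gf (Z i)" if "i < n" "w \<in> W" for i w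
    proof (rule ccontr)
      assume "\<not> norm (grad w (Z i)) \<le> Gf (Z i)"
      then have "Z \<in> {Z \<in> space ?PZ. \<not> (\<forall>i\<in>{0..<n}. \<forall>w\<in>W. norm (grad w (Z i)) \<le> Gf (Z i))}"
        using Zsp that by auto
      then have "Z \<in> N" using N(1) by blast
      then show False using Z unfolding A_def by auto
    qed
    define \<beta> where "\<beta> = G powr k / (\<gamma> * \<tau> powr (k - 1))"
    have bias: "(1 / real n) * (\<Sum>i<n. norm (grad u (Z i) - clip (grad u (Z i)) \<tau>)) \<le> \<beta>" if u: "u \<in> W" for u
    proof -
      have "(\<Sum>i<n. norm (grad u (Z i) - clip (grad u (Z i)) \<tau>)) \<le> (\<Sum>i<n. Gf (Z i) powr k / \<tau> powr (k - 1))"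
        by (rule sum_mono) (rule norm_sub_clip_le[OF \<tau>0 k gb]; use u in simp)
      also have "\<dots> = (\<Sum>i<n. Gf (Z i) powr k) / \<tau> powr (k - 1)" by (simp add: sum_divide_distrib)
      finally have "(1 / real n) * (\<Sum>i<n. norm (grad u (Z i) - clip (grad u (Z i)) \<tau>))
          \<le> (1 / real n) * ((\<Sum>i<n. Gf (Z i) powr k) / \<tau> powr (k - 1))"
        by (rule mult_left_mono) simp
      also have "\<dots> = Y Z / \<tau> powr (k - 1)" unfolding Y_def by simp
      also have "\<dots> \<le> c / \<tau> powr (k - 1)" using YZ \<tau>0 by (simp add: divide_right_mono)
      also have "\<dots> = \<beta>" unfolding c_def \<beta>_def by simp
      finally show ?thesis .
    qed
    let ?OR = "(1 / real T) * (\<Sum>t<T. \<integral>\<omega>. emp_obj loss n Z (dpsgd_iter grad n Z W w0 (\<lambda>_. \<eta>) b \<tau> \<omega> t) \<partial>?\<Omega>) - emp_obj loss n Z ws"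
    have B1: "?OR \<le> 5 * DW * G / (2 * \<gamma> powr (1 / k)) * (1 / real T + \<phi>\<^sup>2) powr ((1 - 1 / k) / 2)"
    proof (cases "DW = 0")
      case True
      interpret PO: prob_space ?\<Omega> by (rule prob_space_dpsgd_rand[OF \<sigma>0])
      have "dpsgd_iter grad n Z W w0 (\<lambda>_. \<eta>) b \<tau> \<omega> t = ws" for \<omega> t
      proof -
        have "dist (dpsgd_iter grad n Z W w0 (\<lambda>_. \<eta>) b \<tau> \<omega> t) ws \<le> DW"
          unfolding DWd by (rule diameter_bounded_bound[OF W_bounded iter_in_W[OF W_closed w0] ws])
        then show ?thesis using True by simp
      qed
      then have "?OR = 0" using T by (simp add: PO.prob_space)
      then show ?thesis using True by simp
    next
      case False
      then have DWp: "0 < DW" using DW0 by simp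
      have \<eta>0: "0 < \<eta>" unfolding \<eta>d using DWp T \<tau>0 s0 by (simp add: s_def[symmetric])
      have "?OR \<le> DW\<^sup>2 / (2 * \<eta> * real T) + \<eta> * (2 * \<tau>\<^sup>2 + real CARD('d) * (sqrt \<sigma>sq)\<^sup>2) / 2 + DW * \<beta>"
        unfolding DWd
        by (rule sgd_bound[OF grad W_convex W_closed W_bounded w0 ws b \<tau>0 \<sigma>0 \<eta>0 T f_convex[OF Zsp]])
           (use wmin bias in auto)
      also have "\<dots> = DW\<^sup>2 / (2 * \<eta> * real T) + \<eta> * (2 * \<tau>\<^sup>2 + real T * \<tau>\<^sup>2 * \<phi>\<^sup>2) / 2 + DW * (G powr k / (\<gamma> * \<tau> powr (k - 1)))"
        unfolding card\<sigma> \<beta>_def ..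
      also have "\<dots> \<le> 5 * DW * G / (2 * \<gamma> powr (1 / k)) * (1 / real T + \<phi>\<^sup>2) powr ((1 - 1 / k) / 2)"
        unfolding \<eta>d \<tau>d
        by (rule arith_main[OF k G \<gamma>(1) _ refl DWp]) (use T in simp)
      finally show ?thesis .
    qed
    show "?OR \<le> 5 * DW * G / (2 * \<gamma> powr (1 / k)) * (1 / real T + \<phi>\<^sup>2) powr ((1 - 1 / k) / 2)"
      by (rule B1)
    assume TT: "real T = 1 / \<phi>\<^sup>2"
    have "1 / real T = \<phi>\<^sup>2" using TT \<phi>0 by simp
    then have "5 * DW * G / (2 * \<gamma> powr (1 / k)) * (1 / real T + \<phi>\<^sup>2) powr ((1 - 1 / k) / 2)
        = 5 * DW * G / (2 powr ((1 + 1 / k) / 2) * \<gamma> powr (1 / k)) * \<phi> powr (1 - 1 / k)"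
      using arith_second[OF \<phi>0] by simp
    then show "?OR \<le> 5 * DW * G / (2 powr ((1 + 1 / k) / 2) * \<gamma> powr (1 / k)) * \<phi> powr (1 - 1 / k)"
      using B1 by simp
  qed
qed

theorem mainTheorem2:
  fixes Dist :: "'z measure"
    and loss :: "real^'d \<Rightarrow> 'z \<Rightarrow> real"
    and grad :: "real^'d \<Rightarrow> 'z \<Rightarrow> real^'d"
    and W :: "(real^'d) set"
    and Gf :: "'z \<Rightarrow> real"
    and k G \<gamma> \<epsilon> \<delta> \<nu> b :: real
    and n T :: nat
    and w0 :: "real^'d"
  assumes D_prob: "prob_space Dist"
    and grad: "\<And>w z. ((\<lambda>v. loss v z) has_derivative (\<lambda>h. grad w z \<bullet> h)) (at w)"
    and W_bounded: "bounded W" and W_convex: "convex W" and W_closed: "closed W"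
    and w0: "w0 \<in> W"
    and Gf_nonneg: "\<And>z. Gf z \<ge> 0"
    and Gf_meas: "Gf \<in> borel_measurable Dist"
    and Gf_bound: "AE z in Dist. \<forall>w\<in>W. norm (grad w z) \<le> Gf z"
    and k: "k > 1" and G: "G > 0"
    and Gf_int: "integrable Dist (\<lambda>z. Gf z powr k)"
    and Gf_moment: "(\<integral>z. Gf z powr k \<partial>Dist) powr (1 / k) \<le> G"
    and n: "n \<ge> 1"
    and f_convex: "\<And>Z. Z \<in> space (PiM {0..<n} (\<lambda>_. Dist)) \<Longrightarrow> convex_on W (emp_obj loss n Z)"
    and \<gamma>: "0 < \<gamma>" "\<gamma> < 1"
    and T: "T \<ge> 1"
    and \<epsilon>: "\<epsilon> > 0" and \<delta>: "0 < \<delta>" "\<delta> < 1" and \<nu>: "\<nu> > 0"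
    and b: "1 \<le> b" "b \<le> real n"
  shows
    "let \<phi> = sqrt (\<nu> * real CARD('d) * ln (1 / \<delta>)) / (real n * \<epsilon>);
         DW = diameter W;
         \<tau> = G / \<gamma> powr (1 / k) * (1 / real T + \<phi>\<^sup>2) powr (- 1 / (2 * k));
         \<eta> = DW / (real T * \<tau>) * (1 / real T + \<phi>\<^sup>2) powr (- 1 / 2);
         \<sigma>sq = \<nu> * real T * ln (1 / \<delta>) * \<tau>\<^sup>2 / ((real n)\<^sup>2 * \<epsilon>\<^sup>2);
         \<Omega> = (dpsgd_rand n T b (sqrt \<sigma>sq) :: ((nat \<times> nat \<Rightarrow> bool) \<times> (nat \<times> 'd \<Rightarrow> real)) measure);
         OR = (\<lambda>Z ws. (1 / real T) * (\<Sum>t<T. \<integral>\<omega>. emp_obj loss n Z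
                  (dpsgd_iter grad n Z W w0 (\<lambda>_. \<eta>) b \<tau> \<omega> t) \<partial>\<Omega>) - emp_obj loss n Z ws)
     in \<exists>A \<in> sets (PiM {0..<n} (\<lambda>_. Dist)).
          measure (PiM {0..<n} (\<lambda>_. Dist)) A \<ge> 1 - \<gamma> \<and>
          (\<forall>Z\<in>A. \<forall>ws\<in>W. (\<forall>w\<in>W. emp_obj loss n Z ws \<le> emp_obj loss n Z w) \<longrightarrow>
             OR Z ws \<le> 5 * DW * G / (2 * \<gamma> powr (1 / k)) * (1 / real T + \<phi>\<^sup>2) powr ((1 - 1 / k) / 2)
             \<and> (real T = 1 / \<phi>\<^sup>2 \<longrightarrow>
                OR Z ws \<le> 5 * DW * G / (2 powr ((1 + 1 / k) / 2) * \<gamma> powr (1 / k)) * \<phi> powr (1 - 1 / k)))"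
  unfolding Let_def
  by (rule main_core[OF D_prob grad W_bounded W_convex W_closed w0 Gf_nonneg Gf_meas Gf_bound k G Gf_int Gf_moment n f_convex \<gamma> T \<epsilon> \<delta> \<nu> b refl refl refl refl refl])


end
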